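(* Fix a dimension $d\ge 1$ (stochastic and deterministic CA on $\mathbb{Z}^d$). Let $\mathcal{P}_N$ be the decision problem: given two stochastic CA with the same set of states, do they have the same non-deterministic global function? Let $\mathcal{P}_S$ be the decision problem: given two stochastic CA with the same set of states, do they have the same stochastic global function? Then the surjectivity problem for classical deterministic cellular automata (given a deterministic CA $F:Q^{\mathbb{Z}^d}\to Q^{\mathbb{Z}^d}$, is $F$ surjective?) is (computably) reducible to $\mathcal{P}_N$ and also to $\mathcal{P}_S$.
   Context: A stochastic cellular automaton (stochastic CA) is a tuple $(Q,R,V,V',f)$ where $Q$ is a finite set of states, $R$ a finite set of random symbols, $V=\{v_1,\dots,v_r\}$ and $V'=\{v'_1,\dots,v'_{r'}\}$ finite subsets of $\mathbb{Z}$ (neighborhoods), and $f:Q^r\times R^{r'}\to Q$ a local transition function. Its explicit global function $F:Q^{\mathbb{Z}}\times R^{\mathbb{Z}}\to Q^{\mathbb{Z}}$ is $F(c,s)_z=f\big((c_{z+v_1},\dots,c_{z+v_r}),(s_{z+v'_1},\dots,s_{z+v'_{r'}})\big)$ (in dimension $d$ the same definitions are used with $\mathbb{Z}$ replaced by $\mathbb{Z}^d$). Cylinders are $[u]_z=\{c: c_{z+x}=u_x \text{ for } 0\le x<|u|\}$; $\nu_R$ denotes the uniform Bernoulli measure on $R^{\mathbb{Z}}$. The non-deterministic global function is $N_F(c)=\{F(c,s): s\in R^{\mathbb{Z}}\}$. The stochastic global function $S_F:Q^{\mathbb{Z}}\to\mathcal{M}(Q^{\mathbb{Z}})$ (Borel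 probability measures) is given by $S_F(c)([u]_z)=\nu_R(\{s\in R^{\mathbb{Z}}: F(c,s)\in[u]_z\})$, i.e. $S_F(c)$ is the law of $F(c,s)$ for $s$ uniformly random. *)

theory Defs
  imports "HOL-Probability.Probability" "HOL-Library.Nat_Bijection"
begin

inductive recfn :: "nat \<Rightarrow> (nat list \<Rightarrow> nat) \<Rightarrow> bool" where
  rf_zero: "recfn k (\<lambda>_. 0)"
| rf_succ: "recfn 1 (\<lambda>xs. Suc (hd xs))"
| rf_proj: "i < k \<Longrightarrow> recfn k (\<lambda>xs. xs ! i)"
| rf_comp: "recfn m f \<Longrightarrow> length gs = m \<Longrightarrow> (\<forall>g\<in>set gs. recfn k g) \<Longrightarrow>
            recfn k (\<lambda>xs. f (map (\<lambda>g. g xs) gs))"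
| rf_prim: "recfn k g \<Longrightarrow> recfn (Suc (Suc k)) h \<Longrightarrow>
            recfn (Suc k) (\<lambda>xs. rec_nat (g (tl xs)) (\<lambda>n acc. h (n # acc # tl xs)) (hd xs))"
| rf_mu: "recfn (Suc k) g \<Longrightarrow> (\<forall>xs. length xs = k \<longrightarrow> (\<exists>y. g (y # xs) = 0)) \<Longrightarrow>
          recfn k (\<lambda>xs. LEAST y. g (y # xs) = 0)"

definition computable :: "(nat \<Rightarrow> nat) \<Rightarrow> bool" where
  "computable f \<longleftrightarrow> (\<exists>g. recfn 1 g \<and> (\<forall>n. g [n] = f n))"

text \<open>Many-one (computable) reduction between decision problems on coded instances.
  A problem is a pair (valid instance codes, yes-instances).\<close>
definition reduces_to ::
  "((nat \<Rightarrow> bool) \<times> (nat \<Rightarrow> bool)) \<Rightarrow> ((nat \<Rightarrow> bool) \<times> (nat \<Rightarrow> bool)) \<Rightarrow> bool" where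
  "reduces_to P P' \<longleftrightarrow> (\<exists>r. computable r \<and>
      (\<forall>n. fst P n \<longrightarrow> fst P' (r n) \<and> (snd P n \<longleftrightarrow> snd P' (r n))))"

text \<open>Points of Z^d are integer lists of length d; configurations are extensional
  functions on this lattice (value undefined outside).\<close>
definition lattice :: "nat \<Rightarrow> int list set" where
  "lattice d = {z. length z = d}"

definition configs :: "nat \<Rightarrow> 'a set \<Rightarrow> (int list \<Rightarrow> 'a) set" where
  "configs d A = (lattice d \<rightarrow>\<^sub>E A)"

definition vadd :: "int list \<Rightarrow> int list \<Rightarrow> int list" where
  "vadd z v = map2 (+) z v"

text \<open>A deterministic CA: (number of states q, with Q = {0..<q}; neighbourhood list;
  local rule as a lookup table).\<close>
type_synonym dca = "nat \<times> int list list \<times> (nat list \<times> nat) list"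

definition dca_valid :: "nat \<Rightarrow> dca \<Rightarrow> bool" where
  "dca_valid d A = (case A of (q, V, tab) \<Rightarrow>
     q \<ge> 1 \<and> (\<forall>v\<in>set V. length v = d) \<and>
     (\<forall>u. length u = length V \<and> set u \<subseteq> {0..<q} \<longrightarrow>
        (\<exists>a\<in>{0..<q}. map_of tab u = Some a)))"

definition dca_global :: "nat \<Rightarrow> dca \<Rightarrow> (int list \<Rightarrow> nat) \<Rightarrow> (int list \<Rightarrow> nat)" where
  "dca_global d A c = (case A of (q, V, tab) \<Rightarrow>
     restrict (\<lambda>z. the (map_of tab (map (\<lambda>v. c (vadd z v)) V))) (lattice d))"

definition dca_surjective :: "nat \<Rightarrow> dca \<Rightarrow> bool" where
  "dca_surjective d A = (case A of (q, V, tab) \<Rightarrow>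
     dca_global d A ` configs d {0..<q} = configs d {0..<q})"

text \<open>(q, with Q = {0..<q}; number of random symbols m, with R = {0..<m};
  neighbourhood V; random neighbourhood V'; local rule table on Q^r x R^r').\<close>
type_synonym sca = "nat \<times> nat \<times> int list list \<times> int list list \<times> ((nat list \<times> nat list) \<times> nat) list"

definition sca_valid :: "nat \<Rightarrow> sca \<Rightarrow> bool" where
  "sca_valid d A = (case A of (q, m, V, V', tab) \<Rightarrow>
     q \<ge> 1 \<and> m \<ge> 1 \<and> (\<forall>v\<in>set V. length v = d) \<and> (\<forall>v\<in>set V'. length v = d) \<and>
     (\<forall>u w. length u = length V \<and> set u \<subseteq> {0..<q} \<and>
            length w = length V' \<and> set w \<subseteq> {0..<m} \<longrightarrow>
        (\<exists>a\<in>{0..<q}. map_of tab (u, w) = Some a)))"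

definition sca_states :: "sca \<Rightarrow> nat" where
  "sca_states A = fst A"

definition sca_randoms :: "sca \<Rightarrow> nat" where
  "sca_randoms A = fst (snd A)"

definition sca_F :: "nat \<Rightarrow> sca \<Rightarrow> (int list \<Rightarrow> nat) \<Rightarrow> (int list \<Rightarrow> nat) \<Rightarrow> (int list \<Rightarrow> nat)" where
  "sca_F d A c s = (case A of (q, m, V, V', tab) \<Rightarrow>
     restrict (\<lambda>z. the (map_of tab (map (\<lambda>v. c (vadd z v)) V, map (\<lambda>v. s (vadd z v)) V')))
       (lattice d))"

definition sca_N :: "nat \<Rightarrow> sca \<Rightarrow> (int list \<Rightarrow> nat) \<Rightarrow> (int list \<Rightarrow> nat) set" where
  "sca_N d A c = (\<lambda>s. sca_F d A c s) ` configs d {0..<sca_randoms A}"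

definition bernoulli_unif :: "nat \<Rightarrow> nat \<Rightarrow> (int list \<Rightarrow> nat) measure" where
  "bernoulli_unif d m = PiM (lattice d) (\<lambda>_. uniform_count_measure {0..<m})"

definition sca_S :: "nat \<Rightarrow> sca \<Rightarrow> (int list \<Rightarrow> nat) \<Rightarrow> (int list \<Rightarrow> nat) measure" where
  "sca_S d A c = distr (bernoulli_unif d (sca_randoms A))
                       (PiM (lattice d) (\<lambda>_. count_space {0..<sca_states A}))
                       (sca_F d A c)"

definition dec_intlist :: "nat \<Rightarrow> int list" where
  "dec_intlist n = map int_decode (list_decode n)"

definition dec_vecs :: "nat \<Rightarrow> int list list" where
  "dec_vecs n = map dec_intlist (list_decode n)"

definition dca_decode :: "nat \<Rightarrow> dca" where
  "dca_decode n = (let (a, b) = prod_decode n; (c, e) = prod_decode b in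
     (a, dec_vecs c, map (\<lambda>p. case prod_decode p of (u, v) \<Rightarrow> (list_decode u, v)) (list_decode e)))"

definition sca_decode :: "nat \<Rightarrow> sca" where
  "sca_decode n = (let (a, b) = prod_decode n; (m, b2) = prod_decode b;
                       (c, b3) = prod_decode b2; (c', e) = prod_decode b3 in
     (a, m, dec_vecs c, dec_vecs c',
      map (\<lambda>p. case prod_decode p of (uw, v) \<Rightarrow>
                 (case prod_decode uw of (u, w) \<Rightarrow> ((list_decode u, list_decode w), v)))
          (list_decode e)))"

definition pair_decode :: "nat \<Rightarrow> sca \<times> sca" where
  "pair_decode n = (case prod_decode n of (a, b) \<Rightarrow> (sca_decode a, sca_decode b))"

definition SURJ :: "nat \<Rightarrow> (nat \<Rightarrow> bool) \<times> (nat \<Rightarrow> bool)" where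
  "SURJ d = ((\<lambda>n. dca_valid d (dca_decode n)), (\<lambda>n. dca_surjective d (dca_decode n)))"

definition pair_valid :: "nat \<Rightarrow> nat \<Rightarrow> bool" where
  "pair_valid d n = (case pair_decode n of (A, B) \<Rightarrow>
     sca_valid d A \<and> sca_valid d B \<and> sca_states A = sca_states B)"

definition P_N :: "nat \<Rightarrow> (nat \<Rightarrow> bool) \<times> (nat \<Rightarrow> bool)" where
  "P_N d = (pair_valid d, (\<lambda>n. case pair_decode n of (A, B) \<Rightarrow>
     (\<forall>c\<in>configs d {0..<sca_states A}. sca_N d A c = sca_N d B c)))"

definition P_S :: "nat \<Rightarrow> (nat \<Rightarrow> bool) \<times> (nat \<Rightarrow> bool)" where
  "P_S d = (pair_valid d, (\<lambda>n. case pair_decode n of (A, B) \<Rightarrow>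
     (\<forall>c\<in>configs d {0..<sca_states A}. sca_S d A c = sca_S d B c)))"

end

theory Submission
  imports Defs "HOL-Analysis.Function_Topology"
begin


definition rk :: "nat \<Rightarrow> (nat list \<Rightarrow> nat) \<Rightarrow> bool" where
  "rk k F \<longleftrightarrow> (\<exists>g. recfn k g \<and> (\<forall>xs. length xs = k \<longrightarrow> g xs = F xs))"

lemma rk_cong: "rk k f \<Longrightarrow> (\<And>xs. length xs = k \<Longrightarrow> f xs = g xs) \<Longrightarrow> rk k g"
  unfolding rk_def by metis

lemma rk_zero: "rk k (\<lambda>_. 0)"
  unfolding rk_def using rf_zero by blast

lemma rk_succ: "rk 1 (\<lambda>xs. Suc (hd xs))"
  unfolding rk_def using rf_succ by blast

lemma rk_proj: "i < k \<Longrightarrow> rk k (\<lambda>xs. xs ! i)"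
  unfolding rk_def using rf_proj by blast

lemma rk_comp_list:
  assumes f: "rk m f" and len: "length gs = m" and gs: "\<forall>g\<in>set gs. rk k g"
  shows "rk k (\<lambda>xs. f (map (\<lambda>g. g xs) gs))"
proof -
  obtain f' where f': "recfn m f'" "\<forall>xs. length xs = m \<longrightarrow> f' xs = f xs"
    using f unfolding rk_def by blast
  have "\<exists>gs'. length gs' = length gs \<and> (\<forall>g\<in>set gs'. recfn k g) \<and>
          (\<forall>xs. length xs = k \<longrightarrow> map (\<lambda>g. g xs) gs' = map (\<lambda>g. g xs) gs)"
    using gs
  proof (induction gs)
    case Nil then show ?case by auto
  next
    case (Cons g gs)
    then obtain gs' where gs': "length gs' = length gs" "\<forall>g\<in>set gs'. recfn k g"
        "\<forall>xs. length xs = k \<longrightarrow> map (\<lambda>g. g xs) gs' = map (\<lambda>g. g xs) gs" by auto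
    from Cons.prems obtain g' where "recfn k g'" "\<forall>xs. length xs = k \<longrightarrow> g' xs = g xs"
      unfolding rk_def by auto
    then show ?case using gs' by (intro exI[of _ "g' # gs'"]) auto
  qed
  then obtain gs' where gs': "length gs' = length gs" "\<forall>g\<in>set gs'. recfn k g"
        "\<forall>xs. length xs = k \<longrightarrow> map (\<lambda>g. g xs) gs' = map (\<lambda>g. g xs) gs" by blast
  have "recfn k (\<lambda>xs. f' (map (\<lambda>g. g xs) gs'))"
    using rf_comp[OF f'(1)] gs' len by auto
  moreover have "\<forall>xs. length xs = k \<longrightarrow> f' (map (\<lambda>g. g xs) gs') = f (map (\<lambda>g. g xs) gs)"
    using gs' f' len by (metis length_map)
  ultimately show ?thesis unfolding rk_def by blast
qed

lemma rk_comp1: "rk 1 f \<Longrightarrow> rk k g \<Longrightarrow> rk k (\<lambda>xs. f [g xs])"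
  using rk_comp_list[of 1 f "[g]" k] by simp

lemma rk_comp2: "rk 2 f \<Longrightarrow> rk k g \<Longrightarrow> rk k h \<Longrightarrow> rk k (\<lambda>xs. f [g xs, h xs])"
  using rk_comp_list[of 2 f "[g,h]" k] by simp

lemma rk_comp3: "rk 3 f \<Longrightarrow> rk k g \<Longrightarrow> rk k h \<Longrightarrow> rk k i \<Longrightarrow> rk k (\<lambda>xs. f [g xs, h xs, i xs])"
  using rk_comp_list[of 3 f "[g,h,i]" k] by simp

lemma rk_prim:
  assumes g: "rk k g" and h: "rk (Suc (Suc k)) h"
  shows "rk (Suc k) (\<lambda>xs. rec_nat (g (tl xs)) (\<lambda>n acc. h (n # acc # tl xs)) (hd xs))"
proof -
  obtain g' where g': "recfn k g'" "\<forall>xs. length xs = k \<longrightarrow> g' xs = g xs"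
    using g unfolding rk_def by blast
  obtain h' where h': "recfn (Suc (Suc k)) h'" "\<forall>xs. length xs = Suc (Suc k) \<longrightarrow> h' xs = h xs"
    using h unfolding rk_def by blast
  have "\<forall>xs. length xs = Suc k \<longrightarrow>
     rec_nat (g' (tl xs)) (\<lambda>n acc. h' (n # acc # tl xs)) (hd xs) =
     rec_nat (g (tl xs)) (\<lambda>n acc. h (n # acc # tl xs)) (hd xs)"
  proof (intro allI impI)
    fix xs :: "nat list" assume l: "length xs = Suc k"
    show "rec_nat (g' (tl xs)) (\<lambda>n acc. h' (n # acc # tl xs)) (hd xs) =
     rec_nat (g (tl xs)) (\<lambda>n acc. h (n # acc # tl xs)) (hd xs)"
      by (induction "hd xs") (use l g' h' in auto)
  qed
  then show ?thesis using rf_prim[OF g'(1) h'(1)] unfolding rk_def by blast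
qed

lemma rk_mu:
  assumes g: "rk (Suc k) g" and tot: "\<And>xs. length xs = k \<Longrightarrow> \<exists>y. g (y # xs) = 0"
  shows "rk k (\<lambda>xs. LEAST y. g (y # xs) = 0)"
proof -
  obtain g' where g': "recfn (Suc k) g'" "\<forall>xs. length xs = Suc k \<longrightarrow> g' xs = g xs"
    using g unfolding rk_def by blast
  have e: "\<And>xs y. length xs = k \<Longrightarrow> g' (y # xs) = g (y # xs)" using g' by auto
  have "recfn k (\<lambda>xs. LEAST y. g' (y # xs) = 0)"
    using rf_mu[OF g'(1)] tot e by metis
  moreover have "\<forall>xs. length xs = k \<longrightarrow> (LEAST y. g' (y # xs) = 0) = (LEAST y. g (y # xs) = 0)"
    using e by simp
  ultimately show ?thesis unfolding rk_def by blast
qed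

lemma rk_const: "rk k (\<lambda>_. c)"
proof (induction c)
  case 0 then show ?case by (rule rk_zero)
next
  case (Suc c)
  from rk_comp1[OF rk_succ Suc] show ?case by simp
qed

definition rk2 :: "(nat \<Rightarrow> nat \<Rightarrow> nat) \<Rightarrow> bool" where
  "rk2 f \<longleftrightarrow> rk 2 (\<lambda>xs. f (xs!0) (xs!1))"
definition rk1 :: "(nat \<Rightarrow> nat) \<Rightarrow> bool" where
  "rk1 f \<longleftrightarrow> rk 1 (\<lambda>xs. f (xs!0))"

lemma len1: "length xs = Suc 0 \<longleftrightarrow> (\<exists>a. xs = [a])"
  by (cases xs) auto
lemma len2: "length xs = 2 \<longleftrightarrow> (\<exists>a b. xs = [a,b])"
  by (cases xs; cases "tl xs") (auto simp: numeral_2_eq_2)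
lemma len3: "length xs = 3 \<longleftrightarrow> (\<exists>a b c. xs = [a,b,c])"
  by (cases xs; cases "tl xs"; cases "tl (tl xs)") (auto simp: numeral_3_eq_3)

lemma rk1_app: "rk1 f \<Longrightarrow> rk k g \<Longrightarrow> rk k (\<lambda>xs. f (g xs))"
  unfolding rk1_def using rk_comp1[of "\<lambda>xs. f (xs!0)" k g] by simp
lemma rk2_app: "rk2 f \<Longrightarrow> rk k g \<Longrightarrow> rk k h \<Longrightarrow> rk k (\<lambda>xs. f (g xs) (h xs))"
  unfolding rk2_def using rk_comp2[of "\<lambda>xs. f (xs!0) (xs!1)" k g h] by simp

lemma rk1_I: assumes "rk k g" "k = 1" "\<And>a. g [a] = f a" shows "rk1 f"
  unfolding rk1_def using assms(1) unfolding assms(2) by (rule rk_cong) (auto simp: len1 assms(3))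
lemma rk2_I: assumes "rk k g" "k = 2" "\<And>a b. g [a,b] = f a b" shows "rk2 f"
  unfolding rk2_def using assms(1) unfolding assms(2) by (rule rk_cong) (auto simp: len2 assms(3))

lemma rk_x0: "rk 1 (\<lambda>xs. xs!0)" by (rule rk_proj) simp
lemma rk2_x0: "rk 2 (\<lambda>xs. xs!0)" by (rule rk_proj) simp
lemma rk2_x1: "rk 2 (\<lambda>xs. xs!1)" by (rule rk_proj) simp

lemma rk1_comp: "rk1 f \<Longrightarrow> rk1 g \<Longrightarrow> rk1 (\<lambda>x. f (g x))"
  unfolding rk1_def by (rule rk1_app[unfolded rk1_def]) auto

lemma rk1_rec:
  assumes "rk2 h"
  shows "rk1 (\<lambda>n. rec_nat c h n)"
proof -
  have "rk (Suc (Suc 0)) (\<lambda>xs. h (xs!0) (xs!1))" using assms unfolding rk2_def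
    by (simp add: numeral_2_eq_2)
  then have h3: "rk (Suc (Suc 0)) (\<lambda>xs. h (xs!0) (xs!1))" .
  have "rk (Suc 0) (\<lambda>xs. rec_nat ((\<lambda>_. c) (tl xs)) (\<lambda>n acc. (\<lambda>ys. h (ys!0) (ys!1)) (n # acc # tl xs)) (hd xs))"
    by (rule rk_prim[OF rk_const h3])
  then show ?thesis by (rule rk1_I) auto
qed

lemma rk2_rec:
  assumes g: "rk1 g" and h: "rk 3 (\<lambda>xs. H (xs!0) (xs!1) (xs!2))"
  shows "rk2 (\<lambda>n y. rec_nat (g y) (\<lambda>n acc. H n acc y) n)"
proof -
  have g': "rk (Suc 0) (\<lambda>xs. g (xs!0))" using g unfolding rk1_def by simp
  have h': "rk (Suc (Suc (Suc 0))) (\<lambda>xs. H (xs!0) (xs!1) (xs!2))" using h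
    by (simp add: numeral_3_eq_3)
  have "rk (Suc (Suc 0)) (\<lambda>xs. rec_nat ((\<lambda>ys. g (ys!0)) (tl xs)) (\<lambda>n acc. (\<lambda>ys. H (ys!0) (ys!1) (ys!2)) (n # acc # tl xs)) (hd xs))"
    by (rule rk_prim[OF g' h'])
  then show ?thesis by (rule rk2_I) (auto simp: numeral_2_eq_2)
qed

lemma rk3_x0: "rk 3 (\<lambda>xs. xs!0)" by (rule rk_proj) simp
lemma rk3_x1: "rk 3 (\<lambda>xs. xs!1)" by (rule rk_proj) simp
lemma rk3_x2: "rk 3 (\<lambda>xs. xs!2)" by (rule rk_proj) simp

lemma rk1_Suc: "rk1 Suc"
  by (rule rk1_I[OF rk_succ]) auto

lemma rk2_add: "rk2 (+)"
proof -
  have s: "rk 3 (\<lambda>xs. Suc (xs!1))" by (rule rk1_app[OF rk1_Suc rk3_x1])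
  have "rk2 (\<lambda>n y. rec_nat (id y) (\<lambda>n acc. (\<lambda>a b c. Suc b) n acc y) n)"
    by (rule rk2_rec) (use s in \<open>auto simp: rk1_def intro: rk_proj\<close>)
  moreover have "rec_nat y (\<lambda>n acc. Suc acc) n = n + y" for n y :: nat by (induction n) auto
  ultimately show ?thesis unfolding rk2_def by simp
qed

lemma rk1_pred: "rk1 (\<lambda>n. n - 1)"
proof -
  have "rk1 (\<lambda>n. rec_nat 0 (\<lambda>a b. a) n)" by (rule rk1_rec) (simp add: rk2_def rk2_x0)
  moreover have "rec_nat 0 (\<lambda>a b. a) n = n - 1" for n :: nat by (cases n) auto
  ultimately show ?thesis by simp
qed

lemma rk2_sub: "rk2 (-)"
proof -
  have p: "rk 3 (\<lambda>xs. xs!1 - 1)" by (rule rk1_app[OF rk1_pred rk3_x1])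
  have "rk2 (\<lambda>n y. rec_nat (id y) (\<lambda>n acc. (\<lambda>a b c. b - 1) n acc y) n)"
    by (rule rk2_rec) (use p in \<open>auto simp: rk1_def intro: rk_proj\<close>)
  moreover have "rec_nat y (\<lambda>n acc. acc - 1) n = y - n" for n y :: nat by (induction n) auto
  ultimately have "rk2 (\<lambda>n y. y - n)" by simp
  then have "rk 2 (\<lambda>xs. (\<lambda>n y. y - n) (xs!1) (xs!0))"
    by (rule rk2_app[OF _ rk2_x1 rk2_x0])
  then show ?thesis unfolding rk2_def by simp
qed

lemma rk_tri: "rk1 triangle"
proof -
  have a: "rk 2 (\<lambda>xs. Suc (xs!0) + xs!1)"
    by (rule rk2_app[OF rk2_add rk1_app[OF rk1_Suc rk2_x0] rk2_x1])
  have "rk1 (\<lambda>n. rec_nat 0 (\<lambda>a b. Suc a + b) n)" by (rule rk1_rec) (use a in \<open>simp add: rk2_def\<close>)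
  moreover have "rec_nat 0 (\<lambda>a b. Suc a + b) n = triangle n" for n by (induction n) auto
  ultimately show ?thesis by simp
qed

lemma rk_pe: "rk2 (\<lambda>x y. prod_encode (x, y))"
proof -
  have "rk 2 (\<lambda>xs. triangle (xs!0 + xs!1) + xs!0)"
    by (rule rk2_app[OF rk2_add rk1_app[OF rk_tri rk2_app[OF rk2_add rk2_x0 rk2_x1]] rk2_x0])
  then show ?thesis unfolding rk2_def prod_encode_def by simp
qed

definition sdiag :: "nat \<Rightarrow> nat" where
  "sdiag n = (LEAST s. 1 - (triangle (Suc s) - n) = 0)"

lemma rk_sdiag: "rk1 sdiag"
proof -
  have g: "rk (Suc 1) (\<lambda>xs. 1 - (triangle (Suc (xs!0)) - xs!1))"
    using rk2_app[OF rk2_sub rk_const rk2_app[OF rk2_sub rk1_app[OF rk_tri rk1_app[OF rk1_Suc rk2_x0]] rk2_x1], of 1]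
    by (simp add: numeral_2_eq_2)
  have "rk 1 (\<lambda>xs. LEAST y. (\<lambda>xs. 1 - (triangle (Suc (xs!0)) - xs!1)) (y # xs) = 0)"
  proof (rule rk_mu[OF g])
    fix xs :: "nat list" assume "length xs = 1"
    have "xs!0 < triangle (Suc (xs!0))" by (induction "xs!0") auto
    then show "\<exists>y. (\<lambda>xs. 1 - (triangle (Suc (xs!0)) - xs!1)) (y # xs) = 0"
      by (intro exI[of _ "xs!0"]) simp
  qed
  then show ?thesis by (rule rk1_I) (auto simp: sdiag_def)
qed

lemma tri_mono: "a \<le> b \<Longrightarrow> triangle a \<le> triangle (b::nat)"
  by (induction b) (auto simp: le_Suc_eq)

lemma sdiag_eq: "sdiag (prod_encode (x, y)) = x + y"
proof -
  let ?n = "prod_encode (x,y)"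
  have n: "?n = triangle (x+y) + x" by (simp add: prod_encode_def)
  have P: "1 - (triangle (Suc s) - ?n) = 0 \<longleftrightarrow> ?n < triangle (Suc s)" for s by auto
  show ?thesis unfolding sdiag_def P
  proof (rule Least_equality)
    show "?n < triangle (Suc (x + y))" using n by simp
    fix s assume "?n < triangle (Suc s)"
    then show "x + y \<le> s" using n tri_mono[of "Suc s" "x+y"] by (rule_tac ccontr) auto
  qed
qed

definition pfst :: "nat \<Rightarrow> nat" where "pfst n = n - triangle (sdiag n)"
definition psnd :: "nat \<Rightarrow> nat" where "psnd n = sdiag n - pfst n"

lemma pfst_psnd: "pfst n = fst (prod_decode n)" "psnd n = snd (prod_decode n)"
proof -
  obtain x y where n: "n = prod_encode (x,y)" by (metis prod_decode_inverse surj_pair)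
  show "pfst n = fst (prod_decode n)" "psnd n = snd (prod_decode n)"
    unfolding n pfst_def psnd_def sdiag_eq prod_encode_inverse by (auto simp: prod_encode_def)
qed

lemma rk_pfst: "rk1 (\<lambda>n. fst (prod_decode n))"
proof -
  have "rk 1 (\<lambda>xs. xs!0 - triangle (sdiag (xs!0)))"
    by (rule rk2_app[OF rk2_sub rk_x0 rk1_app[OF rk_tri rk1_app[OF rk_sdiag rk_x0]]])
  then show ?thesis unfolding rk1_def pfst_psnd(1)[symmetric] pfst_def .
qed

lemma rk_psnd: "rk1 (\<lambda>n. snd (prod_decode n))"
proof -
  have "rk 1 (\<lambda>xs. sdiag (xs!0) - (\<lambda>n. fst (prod_decode n)) (xs!0))"
    by (rule rk2_app[OF rk2_sub rk1_app[OF rk_sdiag rk_x0] rk1_app[OF rk_pfst rk_x0]])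
  then show ?thesis unfolding rk1_def pfst_psnd[symmetric] psnd_def by simp
qed


lemma rk3_ifz: "rk 3 (\<lambda>xs. if xs!0 = 0 then xs!1 else xs!2)"
proof -
  have "rk (Suc 2) (\<lambda>xs. rec_nat ((\<lambda>ys. ys!0) (tl xs)) (\<lambda>n acc. (\<lambda>ys. ys!3) (n # acc # tl xs)) (hd xs))"
    by (rule rk_prim) (auto intro: rk_proj)
  then have P: "rk 3 (\<lambda>xs. rec_nat ((tl xs)!0) (\<lambda>n acc. (n # acc # tl xs)!3) (hd xs))" by simp
  show ?thesis
  proof (rule rk_cong[OF P])
    fix xs :: "nat list" assume "length xs = 3"
    then obtain a b c where "xs = [a,b,c]" by (auto simp: len3)
    then show "rec_nat ((tl xs)!0) (\<lambda>n acc. (n # acc # tl xs)!3) (hd xs) = (if xs!0 = 0 then xs!1 else xs!2)"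
      by (cases a) (auto simp: numeral_3_eq_3)
  qed
qed

lemma rk_ifz: "rk k t \<Longrightarrow> rk k a \<Longrightarrow> rk k b \<Longrightarrow> rk k (\<lambda>xs. if t xs = 0 then a xs else b xs)"
proof -
  have e: "[x,y,z]!1 = y" "[x,y,z]!2 = z" for x y z :: nat by (simp_all add: numeral_2_eq_2)
  assume "rk k t" "rk k a" "rk k b"
  from rk_comp3[OF rk3_ifz this] show ?thesis by (simp only: e nth_Cons_0)
qed

definition hdc :: "nat \<Rightarrow> nat" where "hdc e = fst (prod_decode (e - 1))"
definition tlc :: "nat \<Rightarrow> nat" where "tlc e = snd (prod_decode (e - 1))"

lemma hdc_tlc[simp]: "hdc (list_encode (x # xs)) = x" "tlc (list_encode (x # xs)) = list_encode xs"
  by (simp_all add: hdc_def tlc_def)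

lemma rk_hdc: "rk1 hdc"
  unfolding rk1_def hdc_def by (rule rk1_app[OF rk_pfst rk1_app[OF rk1_pred rk_x0]])
lemma rk_tlc: "rk1 tlc"
  unfolding rk1_def tlc_def by (rule rk1_app[OF rk_psnd rk1_app[OF rk1_pred rk_x0]])

definition rstep :: "(nat \<Rightarrow> nat) \<Rightarrow> nat \<Rightarrow> nat" where
  "rstep \<phi> w = (if fst (prod_decode w) = 0 then w else
     prod_encode (tlc (fst (prod_decode w)),
       Suc (prod_encode (\<phi> (hdc (fst (prod_decode w))), snd (prod_decode w)))))"

lemma rk_rstep: assumes "rk1 \<phi>" shows "rk1 (rstep \<phi>)"
proof -
  have A: "rk 1 (\<lambda>xs. fst (prod_decode (xs!0)))" by (rule rk1_app[OF rk_pfst rk_x0])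
  have B: "rk 1 (\<lambda>xs. snd (prod_decode (xs!0)))" by (rule rk1_app[OF rk_psnd rk_x0])
  have "rk 1 (\<lambda>xs. if fst (prod_decode (xs!0)) = 0 then xs!0 else
     prod_encode (tlc (fst (prod_decode (xs!0))),
       Suc (prod_encode (\<phi> (hdc (fst (prod_decode (xs!0)))), snd (prod_decode (xs!0))))))"
    by (rule rk_ifz[OF A rk_x0 rk2_app[OF rk_pe rk1_app[OF rk_tlc A]
          rk1_app[OF rk1_Suc rk2_app[OF rk_pe rk1_app[OF assms rk1_app[OF rk_hdc A]] B]]]])
  then show ?thesis unfolding rk1_def rstep_def .
qed

lemma rstep_cons: "rstep \<phi> (prod_encode (list_encode (x # xs), a)) =
   prod_encode (list_encode xs, list_encode (\<phi> x # list_decode a))"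
  by (simp add: rstep_def del: list_encode.simps) (simp)

lemma rstep_nil: "rstep \<phi> (prod_encode (0, a)) = prod_encode (0, a)"
  by (simp add: rstep_def)

lemma rstep_iter: "length xs \<le> k \<Longrightarrow>
  (rstep \<phi> ^^ k) (prod_encode (list_encode xs, list_encode acc)) =
   prod_encode (0, list_encode (rev (map \<phi> xs) @ acc))"
proof (induction xs arbitrary: k acc)
  case Nil
  have "(rstep \<phi> ^^ k) (prod_encode (0, a)) = prod_encode (0, a)" for a
    by (induction k) (auto simp: rstep_nil)
  then show ?case by simp
next
  case (Cons x xs)
  then obtain k' where k: "k = Suc k'" "length xs \<le> k'" by (cases k) auto
  have "(rstep \<phi> ^^ k) (prod_encode (list_encode (x # xs), list_encode acc)) =
        (rstep \<phi> ^^ k') (rstep \<phi> (prod_encode (list_encode (x # xs), list_encode acc)))"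
    unfolding k by (simp add: funpow_Suc_right del: funpow.simps list_encode.simps)
  also have "\<dots> = (rstep \<phi> ^^ k') (prod_encode (list_encode xs, list_encode (\<phi> x # acc)))"
    by (simp only: rstep_cons list_encode_inverse)
  also have "\<dots> = prod_encode (0, list_encode (rev (map \<phi> (x # xs)) @ acc))"
    using Cons.IH[OF k(2), of "\<phi> x # acc"] by (simp del: list_encode.simps)
  finally show ?case .
qed

lemma length_le_code: "length xs \<le> list_encode xs"
  by (induction xs) (auto intro: le_trans[OF _ le_prod_encode_2])

definition revmap :: "(nat \<Rightarrow> nat) \<Rightarrow> nat \<Rightarrow> nat" where
  "revmap \<phi> e = snd (prod_decode (rec_nat (prod_encode (e, 0)) (\<lambda>n acc. rstep \<phi> acc) e))"

lemma revmap_eq: "revmap \<phi> e = list_encode (rev (map \<phi> (list_decode e)))"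
proof -
  have r: "rec_nat w (\<lambda>n acc. rstep \<phi> acc) k = (rstep \<phi> ^^ k) w" for w k
    by (induction k) auto
  have "(rstep \<phi> ^^ e) (prod_encode (list_encode (list_decode e), list_encode [])) =
     prod_encode (0, list_encode (rev (map \<phi> (list_decode e)) @ []))"
    by (rule rstep_iter) (metis length_le_code list_decode_inverse)
  then show ?thesis unfolding revmap_def r by simp
qed

lemma rk_revmap: assumes "rk1 \<phi>" shows "rk1 (revmap \<phi>)"
proof -
  have h: "rk 3 (\<lambda>xs. rstep \<phi> (xs!1))" by (rule rk1_app[OF rk_rstep[OF assms] rk3_x1])
  have g: "rk1 (\<lambda>e. prod_encode (e, 0))"
    unfolding rk1_def by (rule rk2_app[OF rk_pe rk_x0 rk_const])
  have "rk2 (\<lambda>n y. rec_nat (prod_encode (y, 0)) (\<lambda>n acc. (\<lambda>a b c. rstep \<phi> b) n acc y) n)"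
    by (rule rk2_rec[OF g]) (use h in simp)
  then have "rk 1 (\<lambda>xs. snd (prod_decode ((\<lambda>n y. rec_nat (prod_encode (y, 0)) (\<lambda>n acc. rstep \<phi> acc) n) (xs!0) (xs!0))))"
    by (intro rk1_app[OF rk_psnd] rk2_app[OF _ rk_x0 rk_x0]) simp
  then show ?thesis unfolding rk1_def revmap_def by simp
qed

definition mapc :: "(nat \<Rightarrow> nat) \<Rightarrow> nat \<Rightarrow> nat" where
  "mapc \<phi> e = revmap id (revmap \<phi> e)"

lemma mapc_eq: "mapc \<phi> e = list_encode (map \<phi> (list_decode e))"
  unfolding mapc_def revmap_eq by simp

lemma rk_mapc: "rk1 \<phi> \<Longrightarrow> rk1 (mapc \<phi>)"
  unfolding mapc_def
  by (rule rk1_comp[OF rk_revmap rk_revmap]) (auto simp: rk1_def intro: rk_proj)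


definition entryB :: "nat \<Rightarrow> nat" where
  "entryB i = prod_encode (prod_encode (0, list_encode [i]), i)"

definition TB :: "nat \<Rightarrow> nat" where
  "TB q = rec_nat 0 (\<lambda>n acc. Suc (prod_encode (entryB n, acc))) q"

lemma TB_eq: "TB q = list_encode (map entryB (rev [0..<q]))"
  by (induction q) (auto simp: TB_def)

lemma rk_entryB: "rk1 entryB"
proof -
  have "rk 1 (\<lambda>xs. prod_encode (prod_encode (0, Suc (prod_encode (xs!0, 0))), xs!0))"
    by (rule rk2_app[OF rk_pe rk2_app[OF rk_pe rk_const rk1_app[OF rk1_Suc rk2_app[OF rk_pe rk_x0 rk_const]]] rk_x0])
  then show ?thesis unfolding rk1_def entryB_def by simp
qed

lemma rk_TB: "rk1 TB"
proof -
  have "rk 2 (\<lambda>xs. Suc (prod_encode (entryB (xs!0), xs!1)))"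
    by (rule rk1_app[OF rk1_Suc rk2_app[OF rk_pe rk1_app[OF rk_entryB rk2_x0] rk2_x1]])
  then have "rk2 (\<lambda>n acc. Suc (prod_encode (entryB n, acc)))" unfolding rk2_def .
  then show ?thesis unfolding TB_def by (rule rk1_rec)
qed

definition phiA :: "nat \<Rightarrow> nat" where
  "phiA p = prod_encode (prod_encode (0, fst (prod_decode p)), snd (prod_decode p))"

lemma rk_phiA: "rk1 phiA"
proof -
  have "rk 1 (\<lambda>xs. prod_encode (prod_encode (0, fst (prod_decode (xs!0))), snd (prod_decode (xs!0))))"
    by (rule rk2_app[OF rk_pe rk2_app[OF rk_pe rk_const rk1_app[OF rk_pfst rk_x0]] rk1_app[OF rk_psnd rk_x0]])
  then show ?thesis unfolding rk1_def phiA_def .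
qed

definition Kd :: "nat \<Rightarrow> nat" where
  "Kd d = list_encode [list_encode (replicate d (int_encode 0))]"

definition red :: "nat \<Rightarrow> nat \<Rightarrow> nat" where
  "red d n = prod_encode
     (prod_encode (fst (prod_decode n), prod_encode (fst (prod_decode n), prod_encode (0,
        prod_encode (fst (prod_decode (snd (prod_decode n))),
                     mapc phiA (snd (prod_decode (snd (prod_decode n)))))))),
      prod_encode (fst (prod_decode n), prod_encode (fst (prod_decode n), prod_encode (0,
        prod_encode (Kd d, TB (fst (prod_decode n)))))))"

lemma computable_red: "computable (red d)"
proof -
  have A: "rk 1 (\<lambda>xs. fst (prod_decode (xs!0)))" by (rule rk1_app[OF rk_pfst rk_x0])
  have B: "rk 1 (\<lambda>xs. snd (prod_decode (xs!0)))" by (rule rk1_app[OF rk_psnd rk_x0])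
  have C: "rk 1 (\<lambda>xs. fst (prod_decode (snd (prod_decode (xs!0)))))" by (rule rk1_app[OF rk_pfst B])
  have E: "rk 1 (\<lambda>xs. snd (prod_decode (snd (prod_decode (xs!0)))))" by (rule rk1_app[OF rk_psnd B])
  have "rk 1 (\<lambda>xs. red d (xs!0))"
    unfolding red_def
    by (rule rk2_app[OF rk_pe
         rk2_app[OF rk_pe A rk2_app[OF rk_pe A rk2_app[OF rk_pe rk_const rk2_app[OF rk_pe C rk1_app[OF rk_mapc[OF rk_phiA] E]]]]]
         rk2_app[OF rk_pe A rk2_app[OF rk_pe A rk2_app[OF rk_pe rk_const rk2_app[OF rk_pe rk_const rk1_app[OF rk_TB A]]]]]])
  then obtain g where "recfn 1 g" "\<forall>xs. length xs = 1 \<longrightarrow> g xs = red d (xs!0)"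
    unfolding rk_def by blast
  then show ?thesis unfolding computable_def by (intro exI[of _ g]) auto
qed


lemma decode_red:
  assumes "dca_decode n = (q, V, tab)"
  shows "pair_decode (red d n) =
    ((q, q, [], V, map (\<lambda>(w,a). (([],w),a)) tab),
     (q, q, [], [replicate d 0], map (\<lambda>i. (([],[i]),i)) (rev [0..<q])))"
proof -
  obtain a b where ab: "prod_decode n = (a, b)" by (cases "prod_decode n")
  obtain c e where ce: "prod_decode b = (c, e)" by (cases "prod_decode b")
  have q: "q = a" "V = dec_vecs c"
    and tab: "tab = map (\<lambda>p. case prod_decode p of (u, v) \<Rightarrow> (list_decode u, v)) (list_decode e)"
    using assms ab ce by (auto simp: dca_decode_def)
  have r: "red d n = prod_encode
     (prod_encode (a, prod_encode (a, prod_encode (0, prod_encode (c, mapc phiA e)))),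
      prod_encode (a, prod_encode (a, prod_encode (0, prod_encode (Kd d, TB a)))))"
    by (simp add: red_def ab ce)
  have dv0: "dec_vecs 0 = []" by (simp add: dec_vecs_def)
  have dK: "dec_vecs (Kd d) = [replicate d 0]"
    by (simp add: dec_vecs_def Kd_def dec_intlist_def)
  have tA: "map (\<lambda>p. case prod_decode p of (uw, v) \<Rightarrow>
                 (case prod_decode uw of (u, w) \<Rightarrow> ((list_decode u, list_decode w), v)))
          (list_decode (mapc phiA e)) = map (\<lambda>(w,a). (([],w),a)) tab"
    unfolding mapc_eq list_encode_inverse tab
    by (auto simp: phiA_def split: prod.splits)
  have tB: "map (\<lambda>p. case prod_decode p of (uw, v) \<Rightarrow>
                 (case prod_decode uw of (u, w) \<Rightarrow> ((list_decode u, list_decode w), v)))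
          (list_decode (TB a)) = map (\<lambda>i. (([],[i]),i)) (rev [0..<a])"
    unfolding TB_eq list_encode_inverse by (auto simp: entryB_def)
  show ?thesis
    unfolding r pair_decode_def sca_decode_def using dv0 dK tA tB q
    by (simp del: list_encode.simps)
qed


lemma card_PiE_fix:
  assumes "finite Y" "U \<subseteq> Y" "\<And>z. z \<in> U \<Longrightarrow> P z < q"
  shows "card {y \<in> PiE Y (\<lambda>_. {0..<q}). \<forall>z\<in>U. y z = P z} = q ^ card (Y - U)"
proof -
  have "{y \<in> PiE Y (\<lambda>_. {0..<q}). \<forall>z\<in>U. y z = P z} = PiE Y (\<lambda>z. if z \<in> U then {P z} else {0..<q})"
    using assms(2,3) by (auto simp: PiE_iff extensional_def split: if_splits)
  moreover have "card (PiE Y (\<lambda>z. if z \<in> U then {P z} else {0..<q})) = q ^ card (Y - U)"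
  proof -
    have "card (PiE Y (\<lambda>z. if z \<in> U then {P z} else {0..<q})) = (\<Prod>z\<in>Y. if z \<in> U then 1 else q)"
      by (simp add: card_PiE[OF assms(1)] if_distrib cong: if_cong)
    also have "\<dots> = (\<Prod>z\<in>Y - U. q)"
      using assms(1,2) by (simp add: prod.If_cases Int_absorb1 Diff_eq[symmetric] Int_commute)
    finally show ?thesis by simp
  qed
  ultimately show ?thesis by simp
qed

lemma count_core:
  fixes Y PY :: "'a set" and T :: "'t set" and Jt Pt :: "'t \<Rightarrow> 'a set"
    and gl :: "('a \<Rightarrow> nat) \<Rightarrow> 'a \<Rightarrow> nat" and P :: "'a \<Rightarrow> nat"
  assumes fin: "finite Y" "finite PY" "finite T"
    and sub: "\<And>t. t \<in> T \<Longrightarrow> Jt t \<subseteq> Y" "\<And>t. t \<in> T \<Longrightarrow> Pt t \<subseteq> PY"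
    and disj: "\<And>t t'. t \<in> T \<Longrightarrow> t' \<in> T \<Longrightarrow> t \<noteq> t' \<Longrightarrow> Jt t \<inter> Jt t' = {}"
              "\<And>t t'. t \<in> T \<Longrightarrow> t' \<in> T \<Longrightarrow> t \<noteq> t' \<Longrightarrow> Pt t \<inter> Pt t' = {}"
    and lsurj: "\<And>y. y \<in> PiE Y (\<lambda>_. {0..<q}) \<Longrightarrow> \<exists>x \<in> PiE PY (\<lambda>_. {0..<q}). \<forall>z\<in>Y. gl x z = y z"
    and loc: "\<And>t x x' z. t \<in> T \<Longrightarrow> z \<in> Jt t \<Longrightarrow> (\<And>w. w \<in> Pt t \<Longrightarrow> x w = x' w) \<Longrightarrow> gl x z = gl x' z"
    and Pr: "\<And>z. P z < q"
    and cb: "\<And>t. t \<in> T \<Longrightarrow> card {x \<in> PiE (Pt t) (\<lambda>_. {0..<q}). \<forall>z\<in>Jt t. gl x z = P z} \<le> c"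
  shows "q ^ (card Y - (\<Sum>t\<in>T. card (Jt t))) \<le> q ^ (card PY - (\<Sum>t\<in>T. card (Pt t))) * c ^ card T
    \<and> (\<Sum>t\<in>T. card (Jt t)) \<le> card Y \<and> (\<Sum>t\<in>T. card (Pt t)) \<le> card PY"
proof -
  define U where "U = \<Union>(Jt ` T)"
  define U' where "U' = \<Union>(Pt ` T)"
  have UY: "U \<subseteq> Y" "U' \<subseteq> PY" using sub by (auto simp: U_def U'_def)
  have finU: "finite U" "finite U'" using UY fin finite_subset by blast+
  have cU: "card U = (\<Sum>t\<in>T. card (Jt t))"
    unfolding U_def
  proof (rule card_UN_disjoint)
    show "\<forall>i\<in>T. finite (Jt i)" using finite_subset[OF sub(1) fin(1)] by blast
    show "\<forall>i\<in>T. \<forall>j\<in>T. i \<noteq> j \<longrightarrow> Jt i \<inter> Jt j = {}" using disj by blast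
  qed (rule fin)
  have cU': "card U' = (\<Sum>t\<in>T. card (Pt t))"
    unfolding U'_def
  proof (rule card_UN_disjoint)
    show "\<forall>i\<in>T. finite (Pt i)" using finite_subset[OF sub(2) fin(2)] by blast
    show "\<forall>i\<in>T. \<forall>j\<in>T. i \<noteq> j \<longrightarrow> Pt i \<inter> Pt j = {}" using disj by blast
  qed (rule fin)
  define S where "S = {y \<in> PiE Y (\<lambda>_. {0..<q}). \<forall>z\<in>U. y z = P z}"
  have cS: "card S = q ^ (card Y - (\<Sum>t\<in>T. card (Jt t)))"
    unfolding S_def using card_PiE_fix[OF fin(1) UY(1), of P q] Pr
    by (simp add: card_Diff_subset[OF finU(1) UY(1)] cU)
  define Pre where "Pre = {x \<in> PiE PY (\<lambda>_. {0..<q}). \<forall>z\<in>U. gl x z = P z}"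
  define ch where "ch y = (SOME x. x \<in> PiE PY (\<lambda>_. {0..<q}) \<and> (\<forall>z\<in>Y. gl x z = y z))" for y
  have ch: "ch y \<in> PiE PY (\<lambda>_. {0..<q}) \<and> (\<forall>z\<in>Y. gl (ch y) z = y z)" if "y \<in> S" for y
  proof -
    have "y \<in> PiE Y (\<lambda>_. {0..<q})" using that by (auto simp: S_def)
    from lsurj[OF this] obtain x where "x \<in> PiE PY (\<lambda>_. {0..<q}) \<and> (\<forall>z\<in>Y. gl x z = y z)" by blast
    then show ?thesis unfolding ch_def
      using someI[of "\<lambda>x. x \<in> PiE PY (\<lambda>_. {0..<q}) \<and> (\<forall>z\<in>Y. gl x z = y z)"] by blast
  qed
  have inj: "inj_on ch S"
  proof (rule inj_onI)
    fix y y' assume y: "y \<in> S" "y' \<in> S" "ch y = ch y'"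
    show "y = y'"
    proof (rule PiE_ext)
      show "y \<in> PiE Y (\<lambda>_. {0..<q})" "y' \<in> PiE Y (\<lambda>_. {0..<q})" using y by (auto simp: S_def)
      fix z assume "z \<in> Y"
      then show "y z = y' z" using ch[OF y(1)] ch[OF y(2)] y(3) by metis
    qed
  qed
  have chS: "ch ` S \<subseteq> Pre"
    using ch UY(1) by (auto simp: Pre_def S_def)
  have finPi: "finite (PiE A (\<lambda>_. {0..<q}))" if "finite A" for A :: "'a set"
    using that by (simp add: finite_PiE)
  have finPre: "finite Pre"
    unfolding Pre_def by (rule finite_subset[OF _ finPi[OF fin(2)]]) auto
  have "card S \<le> card Pre"
    using card_inj_on_le[OF inj chS finPre] .
  define C where "C t = {x \<in> PiE (Pt t) (\<lambda>_. {0..<q}). \<forall>z\<in>Jt t. gl x z = P z}" for t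
  define h where "h x = (restrict x (PY - U'), restrict (\<lambda>t. restrict x (Pt t)) T)" for x :: "'a \<Rightarrow> nat"
  have hin: "h ` Pre \<subseteq> PiE (PY - U') (\<lambda>_. {0..<q}) \<times> PiE T C"
  proof
    fix w assume "w \<in> h ` Pre"
    then obtain x where x: "x \<in> Pre" "w = h x" by blast
    have "restrict x (Pt t) \<in> C t" if t: "t \<in> T" for t
    proof -
      have "gl (restrict x (Pt t)) z = P z" if z: "z \<in> Jt t" for z
      proof -
        have "gl (restrict x (Pt t)) z = gl x z" by (rule loc[OF t z]) auto
        also have "\<dots> = P z" using x z t by (auto simp: Pre_def U_def)
        finally show ?thesis .
      qed
      then show ?thesis using x(1) sub(2)[OF t] by (auto simp: C_def Pre_def PiE_iff)
    qed
    then show "w \<in> PiE (PY - U') (\<lambda>_. {0..<q}) \<times> PiE T C"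
      using x by (auto simp: h_def Pre_def PiE_iff)
  qed
  have hinj: "inj_on h Pre"
  proof (rule inj_onI)
    fix x x' assume xx: "x \<in> Pre" "x' \<in> Pre" "h x = h x'"
    show "x = x'"
    proof (rule PiE_ext)
      show "x \<in> PiE PY (\<lambda>_. {0..<q})" "x' \<in> PiE PY (\<lambda>_. {0..<q})" using xx by (auto simp: Pre_def)
      fix w assume w: "w \<in> PY"
      show "x w = x' w"
      proof (cases "w \<in> U'")
        case False
        then have "restrict x (PY - U') w = restrict x' (PY - U') w" using xx(3) by (simp add: h_def)
        then show ?thesis using False w by simp
      next
        case True
        then obtain t where t: "t \<in> T" "w \<in> Pt t" by (auto simp: U'_def)
        have "restrict (\<lambda>t. restrict x (Pt t)) T t = restrict (\<lambda>t. restrict x' (Pt t)) T t"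
          using xx(3) by (simp add: h_def)
        then have "restrict x (Pt t) w = restrict x' (Pt t) w" using t by simp
        then show ?thesis using t by simp
      qed
    qed
  qed
  have fin2: "finite (PiE (PY - U') (\<lambda>_. {0..<q}) \<times> PiE T C)"
  proof -
    have "finite (C t)" if "t \<in> T" for t unfolding C_def
      by (rule finite_subset[OF _ finPi[OF finite_subset[OF sub(2)[OF that] fin(2)]]]) auto
    then show ?thesis using finPi[of "PY - U'"] fin(2,3) by (auto intro: finite_PiE)
  qed
  have "card Pre \<le> card (PiE (PY - U') (\<lambda>_. {0..<q}) \<times> PiE T C)"
    using card_inj_on_le[OF hinj hin fin2] .
  also have "\<dots> = q ^ card (PY - U') * (\<Prod>t\<in>T. card (C t))"
    by (simp add: card_cartesian_product card_PiE fin)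
  also have "\<dots> \<le> q ^ card (PY - U') * c ^ card T"
  proof -
    have "(\<Prod>t\<in>T. card (C t)) \<le> (\<Prod>t\<in>T. c)"
      by (rule prod_mono) (use cb in \<open>auto simp: C_def\<close>)
    then show ?thesis by simp
  qed
  also have "card (PY - U') = card PY - (\<Sum>t\<in>T. card (Pt t))"
    using card_Diff_subset[OF finU(2) UY(2)] cU' by simp
  finally have "q ^ (card Y - (\<Sum>t\<in>T. card (Jt t))) \<le> q ^ (card PY - (\<Sum>t\<in>T. card (Pt t))) * c ^ card T"
    using \<open>card S \<le> card Pre\<close> cS by simp
  moreover have "card U \<le> card Y" "card U' \<le> card PY"
    using card_mono[OF fin(1) UY(1)] card_mono[OF fin(2) UY(2)] .
  ultimately show ?thesis using cU cU' by simp
qed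


lemma length_vadd[simp]: "length (vadd z v) = min (length z) (length v)"
  by (simp add: vadd_def)

lemma nth_vadd: "i < length z \<Longrightarrow> i < length v \<Longrightarrow> vadd z v ! i = z ! i + v ! i"
  by (simp add: vadd_def)

lemma vadd_comm3: "length a = length b \<Longrightarrow> length c = length b \<Longrightarrow> vadd (vadd a b) c = vadd (vadd a c) b"
  by (rule nth_equalityI) (auto simp: nth_vadd)

lemma vadd_inj: "length a = length ofs \<Longrightarrow> length b = length ofs \<Longrightarrow> vadd a ofs = vadd b ofs \<Longrightarrow> a = b"
  by (rule nth_equalityI) (simp, metis add_right_cancel nth_vadd)

definition cube :: "nat \<Rightarrow> int \<Rightarrow> int \<Rightarrow> int list set" where
  "cube d a b = {z. set z \<subseteq> {a..<b} \<and> length z = d}"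

lemma card_cube: "card (cube d a b) = nat (b - a) ^ d"
  unfolding cube_def by (simp add: card_lists_length_eq)

lemma finite_cube: "finite (cube d a b)"
  unfolding cube_def by (rule finite_lists_length_eq) simp

lemma cube_lattice: "cube d a b \<subseteq> lattice d"
  by (auto simp: cube_def lattice_def)

lemma in_cube: "z \<in> cube d a b \<longleftrightarrow> length z = d \<and> (\<forall>i<d. a \<le> z!i \<and> z!i < b)"
  unfolding cube_def by (auto simp: in_set_conv_nth subset_iff)


lemma pow_bound: "(x + y) ^ Suc n \<le> x ^ Suc n + Suc n * y * (x + y) ^ n" for x y :: nat
proof (induction n)
  case 0 then show ?case by simp
next
  case (Suc n)
  have "(x + y) ^ Suc (Suc n) = (x + y) * (x + y) ^ Suc n" by simp
  also have "\<dots> \<le> (x + y) * (x ^ Suc n + Suc n * y * (x + y) ^ n)"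
    by (rule mult_left_mono[OF Suc]) simp
  also have "\<dots> = x ^ Suc (Suc n) + y * x ^ Suc n + Suc n * y * (x + y) ^ Suc n"
    by (simp add: algebra_simps)
  also have "y * x ^ Suc n \<le> y * (x + y) ^ Suc n"
    by (intro mult_left_mono power_mono) auto
  finally show ?case by (simp add: algebra_simps)
qed

lemma exL: assumes "1 \<le> P0" shows "\<exists>L\<ge>1. Q * (P0 - 1) ^ L < (P0::nat) ^ L"
proof (cases "P0 = 1")
  case True then show ?thesis by (intro exI[of _ 1]) simp
next
  case False
  then have P: "2 \<le> P0" using assms by simp
  have "1 < real P0 / real (P0 - 1)" using P by (simp add: of_nat_diff)
  from real_arch_pow[OF this, of "real Q"] obtain n where n: "real Q < (real P0 / real (P0 - 1)) ^ n" by blast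
  have pos: "0 < real (P0 - 1)" using P by simp
  have "real Q * real (P0 - 1) ^ n < real P0 ^ n"
    using n pos by (simp add: power_divide pos_less_divide_eq)
  then have Qn: "Q * (P0 - 1) ^ n < P0 ^ n" by (metis of_nat_less_iff of_nat_mult of_nat_power)
  show ?thesis
  proof (cases "n = 0")
    case True
    then have "Q = 0" using Qn by simp
    then show ?thesis using P by (intro exI[of _ 1]) simp
  next
    case False
    then show ?thesis using Qn by (intro exI[of _ n]) simp
  qed
qed

lemma final_arith:
  fixes q d L P0 a b C :: nat
  assumes q: "1 \<le> q" and d: "1 \<le> d" and L: "1 \<le> L"
    and key: "q ^ C * (P0 - 1) ^ L < P0 ^ L"
    and H: "q ^ a * P0 ^ (L ^ d) \<le> q ^ b * (P0 - 1) ^ (L ^ d)"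
    and b: "b \<le> a + C * L ^ (d - 1)"
  shows False
proof -
  have "q ^ b \<le> q ^ (a + C * L ^ (d - 1))" using q b by (simp add: power_increasing)
  then have "q ^ a * P0 ^ (L ^ d) \<le> q ^ a * (q ^ (C * L ^ (d - 1)) * (P0 - 1) ^ (L ^ d))"
    using H by (metis (no_types, lifting) le_trans mult.assoc mult_le_mono1 power_add)
  then have 1: "P0 ^ (L ^ d) \<le> q ^ (C * L ^ (d - 1)) * (P0 - 1) ^ (L ^ d)"
    using q by simp
  have Ld: "L ^ d = L * L ^ (d - 1)" using d by (metis Suc_diff_le diff_Suc_1 power_Suc)
  have "q ^ (C * L ^ (d - 1)) * (P0 - 1) ^ (L ^ d) = (q ^ C * (P0 - 1) ^ L) ^ (L ^ (d - 1))"
    by (simp add: Ld power_mult power_mult_distrib)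
  also have "\<dots> < (P0 ^ L) ^ (L ^ (d - 1))"
    by (rule power_strict_mono[OF key]) (use L in auto)
  also have "\<dots> = P0 ^ (L ^ d)" by (simp add: Ld power_mult)
  finally show False using 1 by simp
qed

lemma H_arith:
  fixes q a b k j pj c :: nat
  assumes q: "1 \<le> q"
    and cc: "q ^ (a - k * j) \<le> q ^ (b - k * pj) * c ^ k"
    and kj: "k * j \<le> a" and kpj: "k * pj \<le> b"
    and def: "c * q ^ j \<le> q ^ pj - 1"
  shows "q ^ a * (q ^ pj) ^ k \<le> q ^ b * (q ^ pj - 1) ^ k"
proof -
  have "q ^ a * (q ^ pj) ^ k = q ^ (a - k * j) * q ^ (k * j) * q ^ (k * pj)"
    using kj by (simp add: power_add[symmetric] power_mult[symmetric] mult.commute)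
  also have "\<dots> \<le> q ^ (b - k * pj) * c ^ k * q ^ (k * j) * q ^ (k * pj)"
    using cc by simp
  also have "\<dots> = q ^ b * (c * q ^ j) ^ k"
    using kpj by (simp add: power_mult_distrib power_add[symmetric] power_mult[symmetric] algebra_simps)
  also have "\<dots> \<le> q ^ b * (q ^ pj - 1) ^ k"
    by (intro mult_left_mono power_mono def) auto
  finally show ?thesis .
qed

lemma tr_disj:
  assumes a: "a \<in> cube d (-h) h" "a' \<in> cube d (-h) h" and t: "length t = d" "length t' = d"
    and e: "vadd a (map ((*) (2*h)) t) = vadd a' (map ((*) (2*h)) t')"
  shows "t = t'"
proof (rule nth_equalityI)
  show "length t = length t'" using t by simp
  fix i assume i: "i < length t"
  have la: "length a = d" "length a' = d" using a by (auto simp: in_cube)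
  have "vadd a (map ((*) (2*h)) t) ! i = vadd a' (map ((*) (2*h)) t') ! i" using e by simp
  then have eq: "a!i + 2*h*t!i = a'!i + 2*h*t'!i" using i t la by (simp add: nth_vadd)
  have b: "-h \<le> a!i" "a!i < h" "-h \<le> a'!i" "a'!i < h" using a i t by (auto simp: in_cube)
  show "t!i = t'!i"
  proof (rule ccontr)
    assume "t!i \<noteq> t'!i"
    then consider "t!i \<ge> t'!i + 1" | "t'!i \<ge> t!i + 1" by linarith
    then show False
    proof cases
      case 1
      have "0 < h" using b by linarith
      then have "2*h*(t'!i + 1) \<le> 2*h*t!i" using 1 by (intro mult_left_mono) auto
      then show False using eq b by (simp add: algebra_simps)
    next
      case 2
      have "0 < h" using b by linarith
      then have "2*h*(t!i + 1) \<le> 2*h*t'!i" using 2 by (intro mult_left_mono) auto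
      then show False using eq b by (simp add: algebra_simps)
    qed
  qed
qed

locale ca =
  fixes d q :: nat and V :: "int list list" and tab :: "(nat list \<times> nat) list"
  assumes valid: "dca_valid d (q, V, tab)" and d1: "1 \<le> d"
begin

definition gl :: "(int list \<Rightarrow> nat) \<Rightarrow> int list \<Rightarrow> nat" where
  "gl s z = the (map_of tab (map (\<lambda>v. s (vadd z v)) V))"

definition pre :: "int list set \<Rightarrow> int list set" where
  "pre J = (\<lambda>(z, v). vadd z v) ` (J \<times> set V)"

definition CS :: "int list set \<Rightarrow> (int list \<Rightarrow> nat) \<Rightarrow> (int list \<Rightarrow> nat) set" where
  "CS J p = {x \<in> PiE (pre J) (\<lambda>_. {0..<q}). \<forall>z\<in>J. gl x z = p z}"

lemma q1: "1 \<le> q" using valid by (simp add: dca_valid_def)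
lemma Vlen: "v \<in> set V \<Longrightarrow> length v = d" using valid by (simp add: dca_valid_def)

lemma G_eq: "dca_global d (q, V, tab) s = restrict (gl s) (lattice d)"
  unfolding dca_global_def gl_def[abs_def] by simp

lemma gl_range: assumes "z \<in> lattice d" "\<And>v. v \<in> set V \<Longrightarrow> s (vadd z v) < q"
  shows "gl s z < q"
proof -
  have "length (map (\<lambda>v. s (vadd z v)) V) = length V \<and> set (map (\<lambda>v. s (vadd z v)) V) \<subseteq> {0..<q}"
    using assms by auto
  moreover have "\<forall>u. length u = length V \<and> set u \<subseteq> {0..<q} \<longrightarrow> (\<exists>a\<in>{0..<q}. map_of tab u = Some a)"
    using valid unfolding dca_valid_def by auto
  ultimately obtain a where "a \<in> {0..<q}" "map_of tab (map (\<lambda>v. s (vadd z v)) V) = Some a"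
    by blast
  then show ?thesis by (simp add: gl_def)
qed

lemma pre_iff: "w \<in> pre J \<longleftrightarrow> (\<exists>z\<in>J. \<exists>v\<in>set V. w = vadd z v)"
  by (auto simp: pre_def)

lemma gl_loc: "z \<in> J \<Longrightarrow> (\<And>w. w \<in> pre J \<Longrightarrow> x w = y w) \<Longrightarrow> gl x z = gl y z"
proof -
  assume z: "z \<in> J" and e: "\<And>w. w \<in> pre J \<Longrightarrow> x w = y w"
  have "map (\<lambda>v. x (vadd z v)) V = map (\<lambda>v. y (vadd z v)) V"
  proof (rule map_cong[OF refl])
    fix v assume "v \<in> set V"
    then have "vadd z v \<in> pre J" using z unfolding pre_iff by blast
    then show "x (vadd z v) = y (vadd z v)" by (rule e)
  qed
  then show ?thesis unfolding gl_def by (rule arg_cong[where f="\<lambda>l. the (map_of tab l)"])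
qed

lemma pre_lattice: "J \<subseteq> lattice d \<Longrightarrow> pre J \<subseteq> lattice d"
  by (auto simp: pre_def lattice_def Vlen)

lemma finite_pre: "finite J \<Longrightarrow> finite (pre J)"
  by (simp add: pre_def)

lemma pre_mono: "J \<subseteq> K \<Longrightarrow> pre J \<subseteq> pre K"
  by (auto simp: pre_def)

lemma gl_range': "z \<in> J \<Longrightarrow> J \<subseteq> lattice d \<Longrightarrow> x \<in> PiE (pre J) (\<lambda>_. {0..<q}) \<Longrightarrow> gl x z < q"
proof (rule gl_range)
  assume a: "z \<in> J" "J \<subseteq> lattice d" "x \<in> PiE (pre J) (\<lambda>_. {0..<q})"
  then show "z \<in> lattice d" by auto
  fix v assume "v \<in> set V"
  then have "vadd z v \<in> pre J" using a unfolding pre_iff by blast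
  then show "x (vadd z v) < q" using a by auto
qed

definition surjF :: bool where
  "surjF \<longleftrightarrow> dca_global d (q, V, tab) ` configs d {0..<q} = configs d {0..<q}"

lemma lsurj:
  assumes S: surjF and Y: "Y \<subseteq> lattice d" and y: "y \<in> PiE Y (\<lambda>_. {0..<q})"
  shows "\<exists>x\<in>PiE (pre Y) (\<lambda>_. {0..<q}). \<forall>z\<in>Y. gl x z = y z"
proof -
  define ye where "ye = restrict (\<lambda>z. if z \<in> Y then y z else 0) (lattice d)"
  have "ye \<in> configs d {0..<q}" using y q1 by (auto simp: ye_def configs_def PiE_iff)
  then obtain s where s: "s \<in> configs d {0..<q}" "dca_global d (q, V, tab) s = ye"
    using S unfolding surjF_def by (metis imageE)
  have sr: "s w \<in> {0..<q}" if "w \<in> lattice d" for w using s(1) that by (auto simp: configs_def)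
  show ?thesis
  proof (intro bexI ballI)
    show "restrict s (pre Y) \<in> PiE (pre Y) (\<lambda>_. {0..<q})"
      using sr pre_lattice[OF Y] by auto
    fix z assume z: "z \<in> Y"
    have "gl (restrict s (pre Y)) z = gl s z" by (rule gl_loc[OF z]) simp
    also have "\<dots> = dca_global d (q, V, tab) s z" using z Y by (auto simp: G_eq)
    also have "\<dots> = y z" using z Y by (simp add: s(2) ye_def subsetD)
    finally show "gl (restrict s (pre Y)) z = y z" .
  qed
qed

lemma pre_tr: assumes "J \<subseteq> lattice d" "length ofs = d"
  shows "pre ((\<lambda>z. vadd z ofs) ` J) = (\<lambda>w. vadd w ofs) ` pre J"
proof -
  have "vadd (vadd z ofs) v = vadd (vadd z v) ofs" if "z \<in> J" "v \<in> set V" for z v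
    using assms that Vlen by (intro vadd_comm3) (auto simp: lattice_def)
  then show ?thesis unfolding pre_def by (auto simp: image_iff) (metis)+
qed

lemma gl_tr: assumes "z \<in> lattice d" "length ofs = d"
  shows "gl x (vadd z ofs) = gl (\<lambda>w. x (vadd w ofs)) z"
proof -
  have "vadd (vadd z ofs) v = vadd (vadd z v) ofs" if "v \<in> set V" for v
    using assms that Vlen by (intro vadd_comm3) (auto simp: lattice_def)
  then have "map (\<lambda>v. x (vadd (vadd z ofs) v)) V = map (\<lambda>v. x (vadd (vadd z v) ofs)) V"
    by (intro map_cong) auto
  then show ?thesis unfolding gl_def by (rule arg_cong[where f="\<lambda>l. the (map_of tab l)"])
qed


lemma finPi: "finite A \<Longrightarrow> finite (PiE A (\<lambda>_. {0..<q::nat}))"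
  by (simp add: finite_PiE)

lemma CS_tr_le:
  assumes J: "J \<subseteq> lattice d" "finite J" and ofs: "length ofs = d"
    and P: "\<And>z. z \<in> J \<Longrightarrow> P (vadd z ofs) = p z"
  shows "card {x \<in> PiE (pre ((\<lambda>z. vadd z ofs) ` J)) (\<lambda>_. {0..<q}). \<forall>z\<in>(\<lambda>z. vadd z ofs) ` J. gl x z = P z}
         \<le> card (CS J p)"
proof -
  let ?S = "{x \<in> PiE (pre ((\<lambda>z. vadd z ofs) ` J)) (\<lambda>_. {0..<q}). \<forall>z\<in>(\<lambda>z. vadd z ofs) ` J. gl x z = P z}"
  have pt: "pre ((\<lambda>z. vadd z ofs) ` J) = (\<lambda>w. vadd w ofs) ` pre J" by (rule pre_tr[OF J(1) ofs])
  define f where "f x = restrict (\<lambda>w. x (vadd w ofs)) (pre J)" for x :: "int list \<Rightarrow> nat"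
  have fin: "finite (CS J p)" unfolding CS_def
    by (rule finite_subset[OF _ finPi[OF finite_pre[OF J(2)]]]) auto
  have im: "f ` ?S \<subseteq> CS J p"
  proof
    fix y assume "y \<in> f ` ?S"
    then obtain x where x: "x \<in> ?S" "y = f x" by blast
    have "f x \<in> PiE (pre J) (\<lambda>_. {0..<q})"
    proof -
      have "x (vadd w ofs) \<in> {0..<q}" if "w \<in> pre J" for w
        using x(1) that pt by (auto simp: PiE_iff)
      then show ?thesis by (auto simp: f_def)
    qed
    moreover have "gl (f x) z = p z" if z: "z \<in> J" for z
    proof -
      have "gl (f x) z = gl (\<lambda>w. x (vadd w ofs)) z" by (rule gl_loc[OF z]) (simp add: f_def)
      also have "\<dots> = gl x (vadd z ofs)" using gl_tr[of z ofs x] z J ofs by auto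
      also have "\<dots> = P (vadd z ofs)" using x(1) z by auto
      finally show ?thesis using P[OF z] by simp
    qed
    ultimately show "y \<in> CS J p" using x by (auto simp: CS_def)
  qed
  have inj: "inj_on f ?S"
  proof (rule inj_onI)
    fix x x' assume xx: "x \<in> ?S" "x' \<in> ?S" "f x = f x'"
    show "x = x'"
    proof (rule PiE_ext)
      show "x \<in> PiE (pre ((\<lambda>z. vadd z ofs) ` J)) (\<lambda>_. {0..<q})"
           "x' \<in> PiE (pre ((\<lambda>z. vadd z ofs) ` J)) (\<lambda>_. {0..<q})" using xx by auto
      fix w' assume "w' \<in> pre ((\<lambda>z. vadd z ofs) ` J)"
      then obtain w where w: "w \<in> pre J" "w' = vadd w ofs" using pt by auto
      have "f x w = f x' w" using xx(3) by simp
      then show "x w' = x' w'" using w by (simp add: f_def)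
    qed
  qed
  show ?thesis using card_inj_on_le[OF inj im fin] .
qed


lemma no_deficit:
  assumes S: surjF and J: "finite J" "J \<subseteq> lattice d" and p: "p \<in> PiE J (\<lambda>_. {0..<q})"
  shows "q ^ card (pre J) \<le> card (CS J p) * q ^ card J"
proof (rule ccontr)
  assume "\<not> ?thesis"
  then have def: "card (CS J p) * q ^ card J \<le> q ^ card (pre J) - 1" by simp
  define c where "c = card (CS J p)"
  define P0 where "P0 = q ^ card (pre J)"
  have P01: "1 \<le> P0" unfolding P0_def using q1 by simp
  define r :: nat where "r = Max (insert 0 ((\<lambda>(v,i). nat \<bar>v!i\<bar>) ` (set V \<times> {..<d})))"
  have r: "\<bar>v!i\<bar> \<le> int r" if "v \<in> set V" "i < d" for v i
  proof -
    have "nat \<bar>v!i\<bar> \<le> r" unfolding r_def by (rule Max_ge) (use that in auto)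
    then show ?thesis by simp
  qed
  define m :: nat where "m = Max (insert 0 ((\<lambda>(z,i). nat \<bar>z!i\<bar>) ` (J \<times> {..<d}))) + 1"
  have m: "- int m \<le> z!i \<and> z!i < int m" if "z \<in> J" "i < d" for z i
  proof -
    have "nat \<bar>z!i\<bar> \<le> m - 1" unfolding m_def by simp (rule Max_ge, use that J(1) in auto)
    then show ?thesis unfolding m_def by linarith
  qed
  define h :: int where "h = int m + int r"
  have h1: "1 \<le> h" unfolding h_def m_def by simp
  have Jlen: "length z = d" if "z \<in> J" for z using that J(2) by (auto simp: lattice_def)
  have Jc: "J \<subseteq> cube d (-h) h"
  proof
    fix z assume z: "z \<in> J"
    show "z \<in> cube d (-h) h" unfolding in_cube using m[OF z] Jlen[OF z] by (auto simp: h_def) (smt (verit) of_nat_0_le_iff)+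
  qed
  have pJc: "pre J \<subseteq> cube d (-h) h"
  proof
    fix w assume "w \<in> pre J"
    then obtain z v where zv: "z \<in> J" "v \<in> set V" "w = vadd z v" by (auto simp: pre_iff)
    have lv: "length v = d" using Vlen zv(2) .
    show "w \<in> cube d (-h) h" unfolding in_cube
    proof (intro conjI allI impI)
      show "length w = d" using zv lv Jlen by simp
      fix i assume i: "i < d"
      have "w!i = z!i + v!i" using zv lv Jlen i by (simp add: nth_vadd)
      then show "- h \<le> w ! i" "w ! i < h" using m[OF zv(1) i] r[OF zv(2) i] by (auto simp: h_def)
    qed
  qed
  define Mn :: nat where "Mn = 2 * (m + r)"
  define C where "C = d * (2 * r) * (Mn + 2 * r) ^ (d - 1)"
  obtain L where L: "1 \<le> L" "q ^ C * (P0 - 1) ^ L < P0 ^ L" using exL[OF P01, of "q ^ C"] by blast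
  define M where "M = 2 * h"
  have MMn: "M = int Mn" by (simp add: M_def Mn_def h_def)
  define T where "T = cube d 0 (int L)"
  define off where "off t = map ((*) M) t" for t
  define Jt where "Jt t = (\<lambda>z. vadd z (off t)) ` J" for t
  define Pt where "Pt t = (\<lambda>w. vadd w (off t)) ` pre J" for t
  define Y where "Y = cube d (-h) (M * int L - h)"
  have Tlen: "length t = d" if "t \<in> T" for t using that by (simp add: T_def in_cube)
  have offlen: "length (off t) = d" if "t \<in> T" for t using Tlen[OF that] by (simp add: off_def)
  have Pt_eq: "Pt t = pre (Jt t)" if "t \<in> T" for t
    unfolding Pt_def Jt_def by (rule pre_tr[OF J(2) offlen[OF that], symmetric])
  have YL: "Y \<subseteq> lattice d" unfolding Y_def by (rule cube_lattice)
  have JY: "Jt t \<subseteq> Y" if t: "t \<in> T" for t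
  proof
    fix w assume "w \<in> Jt t"
    then obtain z where z: "z \<in> J" "w = vadd z (off t)" by (auto simp: Jt_def)
    show "w \<in> Y" unfolding Y_def in_cube
    proof (intro conjI allI impI)
      show "length w = d" using z Jlen offlen[OF t] by simp
      fix i assume i: "i < d"
      have wi: "w!i = z!i + M * t!i" using z Jlen offlen[OF t] i Tlen[OF t] by (simp add: nth_vadd off_def)
      have ti: "0 \<le> t!i" "t!i \<le> int L - 1" using t i by (auto simp: T_def in_cube)
      have "0 \<le> M * t!i" "M * t!i \<le> M * (int L - 1)" using ti h1 by (auto simp: M_def intro: mult_left_mono)
      then show "- h \<le> w ! i" "w ! i < M * int L - h" using wi m[OF z(1) i] by (auto simp: M_def h_def algebra_simps)
    qed
  qed
  have PY: "Pt t \<subseteq> pre Y" if "t \<in> T" for t using Pt_eq[OF that] pre_mono[OF JY[OF that]] by simp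
  have disjgen: "t = t'" if "A \<subseteq> cube d (-h) h" "t \<in> T" "t' \<in> T" "a \<in> A" "a' \<in> A"
      "vadd a (off t) = vadd a' (off t')" for A t t' a a'
    by (rule tr_disj[of a d h a' t t']) (use that Tlen in \<open>auto simp: off_def M_def\<close>)
  have disjJ: "Jt t \<inter> Jt t' = {}" if "t \<in> T" "t' \<in> T" "t \<noteq> t'" for t t'
    using that disjgen[OF Jc] by (auto simp: Jt_def)
  have disjP: "Pt t \<inter> Pt t' = {}" if "t \<in> T" "t' \<in> T" "t \<noteq> t'" for t t'
    using that disjgen[OF pJc] by (auto simp: Pt_def)
  define P where "P w = (if \<exists>t\<in>T. \<exists>z\<in>J. w = vadd z (off t)
      then p (SOME z. z \<in> J \<and> (\<exists>t\<in>T. w = vadd z (off t))) else 0)" for w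
  have Pval: "P (vadd z (off t)) = p z" if zt: "z \<in> J" "t \<in> T" for z t
  proof -
    have ex: "\<exists>z'. z' \<in> J \<and> (\<exists>t'\<in>T. vadd z (off t) = vadd z' (off t'))" using zt by blast
    define z' where "z' = (SOME z'. z' \<in> J \<and> (\<exists>t'\<in>T. vadd z (off t) = vadd z' (off t')))"
    have z': "z' \<in> J" "\<exists>t'\<in>T. vadd z (off t) = vadd z' (off t')"
      using someI_ex[OF ex] unfolding z'_def by blast+
    then obtain t' where t': "t' \<in> T" "vadd z (off t) = vadd z' (off t')" by blast
    have "t = t'" by (rule disjgen[OF Jc zt(2) t'(1) zt(1) z'(1) t'(2)])
    then have "z = z'" using t'(2) vadd_inj[of z "off t" z'] Jlen zt z'(1) offlen by simp
    then show ?thesis unfolding P_def z'_def using zt by auto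
  qed
  have Pq: "P w < q" for w
  proof (cases "\<exists>t\<in>T. \<exists>z\<in>J. w = vadd z (off t)")
    case True
    then obtain t z where "t \<in> T" "z \<in> J" "w = vadd z (off t)" by blast
    then show ?thesis using Pval p by auto
  next
    case False then show ?thesis using q1 by (simp add: P_def)
  qed
  have cb: "card {x \<in> PiE (Pt t) (\<lambda>_. {0..<q}). \<forall>z\<in>Jt t. gl x z = P z} \<le> c" if t: "t \<in> T" for t
    unfolding Pt_eq[OF t] c_def Jt_def
    by (rule CS_tr_le[OF J(2) J(1) offlen[OF t]]) (use Pval t in auto)
  have core: "q ^ (card Y - (\<Sum>t\<in>T. card (Jt t))) \<le> q ^ (card (pre Y) - (\<Sum>t\<in>T. card (Pt t))) * c ^ card T
    \<and> (\<Sum>t\<in>T. card (Jt t)) \<le> card Y \<and> (\<Sum>t\<in>T. card (Pt t)) \<le> card (pre Y)"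
  proof (rule count_core)
    show "finite Y" "finite T" unfolding Y_def T_def by (rule finite_cube)+
    show "finite (pre Y)" unfolding Y_def by (rule finite_pre[OF finite_cube])
    show "\<And>t. t \<in> T \<Longrightarrow> Jt t \<subseteq> Y" by (rule JY)
    show "\<And>t. t \<in> T \<Longrightarrow> Pt t \<subseteq> pre Y" by (rule PY)
    show "\<And>t t'. t \<in> T \<Longrightarrow> t' \<in> T \<Longrightarrow> t \<noteq> t' \<Longrightarrow> Jt t \<inter> Jt t' = {}" by (rule disjJ)
    show "\<And>t t'. t \<in> T \<Longrightarrow> t' \<in> T \<Longrightarrow> t \<noteq> t' \<Longrightarrow> Pt t \<inter> Pt t' = {}" by (rule disjP)
    show "\<And>y. y \<in> PiE Y (\<lambda>_. {0..<q}) \<Longrightarrow> \<exists>x\<in>PiE (pre Y) (\<lambda>_. {0..<q}). \<forall>z\<in>Y. gl x z = y z"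
      by (rule lsurj[OF S YL])
    show "\<And>t x x' z. t \<in> T \<Longrightarrow> z \<in> Jt t \<Longrightarrow> (\<And>w. w \<in> Pt t \<Longrightarrow> x w = x' w) \<Longrightarrow> gl x z = gl x' z"
    proof -
      fix t z and x x' :: "int list \<Rightarrow> nat" assume "t \<in> T" "z \<in> Jt t" "\<And>w. w \<in> Pt t \<Longrightarrow> x w = x' w"
      then show "gl x z = gl x' z" using gl_loc[of z "Jt t" x x'] Pt_eq by simp
    qed
    show "\<And>z. P z < q" by (rule Pq)
    show "\<And>t. t \<in> T \<Longrightarrow> card {x \<in> PiE (Pt t) (\<lambda>_. {0..<q}). \<forall>z\<in>Jt t. gl x z = P z} \<le> c" by (rule cb)
  qed
  have cJt: "card (Jt t) = card J" if t: "t \<in> T" for t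
    unfolding Jt_def
    by (rule card_image, rule inj_onI, rule vadd_inj[of _ "off t"]) (use Jlen offlen[OF t] in auto)
  have pJlen: "length w = d" if "w \<in> pre J" for w using that pre_lattice[OF J(2)] by (auto simp: lattice_def)
  have cPt: "card (Pt t) = card (pre J)" if t: "t \<in> T" for t
    unfolding Pt_def
    by (rule card_image, rule inj_onI, rule vadd_inj[of _ "off t"]) (use pJlen offlen[OF t] in auto)
  have s1: "(\<Sum>t\<in>T. card (Jt t)) = card T * card J" using cJt by simp
  have s2: "(\<Sum>t\<in>T. card (Pt t)) = card T * card (pre J)" using cPt by simp
  have cT: "card T = L ^ d" unfolding T_def card_cube by simp
  have cY: "card Y = (Mn * L) ^ d" unfolding Y_def card_cube MMn by (simp add: nat_mult_distrib)
  have preYc: "pre Y \<subseteq> cube d (-h - int r) (M * int L - h + int r)"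
  proof
    fix w assume "w \<in> pre Y"
    then obtain z v where zv: "z \<in> Y" "v \<in> set V" "w = vadd z v" by (auto simp: pre_iff)
    have lv: "length v = d" using Vlen zv(2) .
    have lz: "length z = d" using zv(1) by (auto simp: Y_def in_cube)
    show "w \<in> cube d (-h - int r) (M * int L - h + int r)" unfolding in_cube
    proof (intro conjI allI impI)
      show "length w = d" using zv lv lz by simp
      fix i assume i: "i < d"
      have "w!i = z!i + v!i" using zv lv lz i by (simp add: nth_vadd)
      moreover have "-h \<le> z!i" "z!i < M * int L - h" using zv(1) i by (auto simp: Y_def in_cube)
      ultimately show "- h - int r \<le> w ! i" "w ! i < M * int L - h + int r" using r[OF zv(2) i] by auto
    qed
  qed
  have cPY: "card (pre Y) \<le> (Mn * L + 2 * r) ^ d"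
  proof -
    have "card (pre Y) \<le> card (cube d (-h - int r) (M * int L - h + int r))"
      by (rule card_mono[OF finite_cube preYc])
    also have "\<dots> = (Mn * L + 2 * r) ^ d" unfolding card_cube MMn
      by (simp add: nat_add_distrib nat_mult_distrib)
    finally show ?thesis .
  qed
  have bnd: "card (pre Y) \<le> card Y + C * L ^ (d - 1)"
  proof -
    have dd: "Suc (d - 1) = d" using d1 by simp
    have "(Mn * L + 2 * r) ^ d \<le> (Mn * L) ^ d + d * (2 * r) * (Mn * L + 2 * r) ^ (d - 1)"
      using pow_bound[of "Mn * L" "2 * r" "d - 1"] unfolding dd .
    also have "(Mn * L + 2 * r) ^ (d - 1) \<le> ((Mn + 2 * r) * L) ^ (d - 1)"
      using L(1) by (intro power_mono) (auto simp: algebra_simps)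
    also have "((Mn + 2 * r) * L) ^ (d - 1) = (Mn + 2 * r) ^ (d - 1) * L ^ (d - 1)"
      by (simp add: power_mult_distrib)
    finally show ?thesis using cPY cY by (simp add: C_def mult.assoc)
  qed
  have H: "q ^ card Y * P0 ^ (L ^ d) \<le> q ^ card (pre Y) * (P0 - 1) ^ (L ^ d)"
    unfolding P0_def cT[symmetric]
    by (rule H_arith[OF q1]) (use core s1 s2 def in \<open>auto simp: c_def\<close>)
  show False by (rule final_arith[OF q1 d1 L(1) L(2) H bnd])
qed



lemma balance:
  assumes S: surjF and J: "finite J" "J \<subseteq> lattice d" and p: "p \<in> PiE J (\<lambda>_. {0..<q})"
  shows "card (CS J p) * q ^ card J = q ^ card (pre J)"
proof (rule ccontr)
  assume ne: "card (CS J p) * q ^ card J \<noteq> q ^ card (pre J)"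
  let ?X = "PiE (pre J) (\<lambda>_. {0..<q})"
  let ?Q = "PiE J (\<lambda>_. {0..<q})"
  have finQ: "finite ?Q" by (rule finPi[OF J(1)])
  have XU: "?X = (\<Union>p'\<in>?Q. CS J p')"
  proof
    show "?X \<subseteq> (\<Union>p'\<in>?Q. CS J p')"
    proof
      fix x assume x: "x \<in> ?X"
      have "restrict (gl x) J \<in> ?Q" using gl_range'[OF _ J(2) x] by auto
      moreover have "x \<in> CS J (restrict (gl x) J)" using x by (simp add: CS_def)
      ultimately show "x \<in> (\<Union>p'\<in>?Q. CS J p')" by blast
    qed
  qed (auto simp: CS_def)
  have cX: "card ?X = (\<Sum>p'\<in>?Q. card (CS J p'))"
    unfolding XU
  proof (rule card_UN_disjoint[OF finQ])
    show "\<forall>i\<in>?Q. finite (CS J i)" unfolding CS_def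
      using finPi[OF finite_pre[OF J(1)]] by (auto intro: finite_subset)
    show "\<forall>i\<in>?Q. \<forall>j\<in>?Q. i \<noteq> j \<longrightarrow> CS J i \<inter> CS J j = {}"
    proof (intro ballI impI)
      fix i j assume ij: "i \<in> ?Q" "j \<in> ?Q" "i \<noteq> j"
      show "CS J i \<inter> CS J j = {}"
      proof (rule ccontr)
        assume "CS J i \<inter> CS J j \<noteq> {}"
        then obtain x where "x \<in> CS J i" "x \<in> CS J j" by blast
        then have "\<forall>z\<in>J. i z = j z" by (auto simp: CS_def)
        then have "i = j" using ij(1,2) by (intro PiE_ext) auto
        then show False using ij(3) by simp
      qed
    qed
  qed
  have cX': "card ?X = q ^ card (pre J)" by (simp add: card_PiE finite_pre[OF J(1)])
  have cQ: "card ?Q = q ^ card J" by (simp add: card_PiE J(1))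
  have ge: "q ^ card (pre J) \<le> card (CS J p') * q ^ card J" if "p' \<in> ?Q" for p'
    by (rule no_deficit[OF S J that])
  have "(\<Sum>p'\<in>?Q. q ^ card (pre J)) < (\<Sum>p'\<in>?Q. card (CS J p') * q ^ card J)"
  proof (rule sum_strict_mono_ex1[OF finQ])
    show "\<forall>x\<in>?Q. q ^ card (pre J) \<le> card (CS J x) * q ^ card J" using ge by blast
    have "q ^ card (pre J) < card (CS J p) * q ^ card J" using ge[OF p] ne by linarith
    then show "\<exists>a\<in>?Q. q ^ card (pre J) < card (CS J a) * q ^ card J" using p by blast
  qed
  also have "\<dots> = card ?X * q ^ card J" by (simp add: cX sum_distrib_right)
  also have "\<dots> = (\<Sum>p'\<in>?Q. q ^ card (pre J))" by (simp add: cX' cQ mult.commute)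
  finally show False by simp
qed


definition KT where "KT = product_topology (\<lambda>_. discrete_topology {0..<q}) (lattice d)"

lemma topspace_KT: "topspace KT = configs d {0..<q}"
  by (simp add: KT_def configs_def)

lemma compact_KT: "compact_space KT"
  unfolding KT_def by (simp add: compact_space_product_topology compact_space_discrete_topology)

lemma cyl_open:
  assumes D: "finite D"
  shows "openin KT {s \<in> topspace KT. restrict s D \<in> Q}"
  unfolding openin_product_topology_alt KT_def
proof (intro ballI)
  fix x assume x: "x \<in> {s \<in> topspace (product_topology (\<lambda>_. discrete_topology {0..<q}) (lattice d)). restrict s D \<in> Q}"
  define U where "U i = (if i \<in> D then {x i} else {0..<q})" for i
  have xt: "x \<in> PiE (lattice d) (\<lambda>_. {0..<q})" "restrict x D \<in> Q" using x by auto
  show "\<exists>U. finite {i \<in> lattice d. U i \<noteq> topspace (discrete_topology {0..<q})} \<and>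
             (\<forall>i\<in>lattice d. openin (discrete_topology {0..<q}) (U i)) \<and>
             x \<in> PiE (lattice d) U \<and>
             PiE (lattice d) U \<subseteq> {s \<in> topspace (product_topology (\<lambda>_. discrete_topology {0..<q}) (lattice d)). restrict s D \<in> Q}"
  proof (intro exI[of _ U] conjI)
    show "finite {i \<in> lattice d. U i \<noteq> topspace (discrete_topology {0..<q})}"
      by (rule finite_subset[OF _ D]) (auto simp: U_def)
    show "\<forall>i\<in>lattice d. openin (discrete_topology {0..<q}) (U i)" using xt by (auto simp: U_def)
    show "x \<in> PiE (lattice d) U" using xt by (auto simp: U_def PiE_iff)
    show "PiE (lattice d) U \<subseteq> {s \<in> topspace (product_topology (\<lambda>_. discrete_topology {0..<q}) (lattice d)). restrict s D \<in> Q}"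
    proof
      fix s assume s: "s \<in> PiE (lattice d) U"
      have "restrict s D = restrict x D"
      proof (rule ext)
        fix i show "restrict s D i = restrict x D i"
        proof (cases "i \<in> D")
          case True
          show ?thesis
          proof (cases "i \<in> lattice d")
            case True
            then show ?thesis using s \<open>i \<in> D\<close> by (auto simp: U_def PiE_iff)
          next
            case False
            then show ?thesis using s xt \<open>i \<in> D\<close> by (auto simp: PiE_iff extensional_def)
          qed
        qed simp
      qed
      moreover have "s \<in> PiE (lattice d) (\<lambda>_. {0..<q})" using s xt by (auto simp: U_def PiE_iff split: if_splits)
      ultimately show "s \<in> {s \<in> topspace (product_topology (\<lambda>_. discrete_topology {0..<q}) (lattice d)). restrict s D \<in> Q}"
        using xt by simp
    qed
  qed
qed

lemma cyl_closed:
  assumes D: "finite D"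
  shows "closedin KT {s \<in> topspace KT. restrict s D \<in> Q}"
proof -
  have "topspace KT - {s \<in> topspace KT. restrict s D \<in> Q} = {s \<in> topspace KT. restrict s D \<in> - Q}" by auto
  then show ?thesis unfolding closedin_def using cyl_open[OF D, of "- Q"] by auto
qed

lemma compact_lift:
  assumes y: "y \<in> configs d {0..<q}"
    and H: "\<And>W. finite W \<Longrightarrow> W \<subseteq> lattice d \<Longrightarrow> \<exists>s\<in>configs d {0..<q}. \<forall>z\<in>W. gl s z = y z"
  shows "y \<in> dca_global d (q, V, tab) ` configs d {0..<q}"
proof -
  define K where "K W = {s \<in> topspace KT. \<forall>z\<in>W. gl s z = y z}" for W
  have K_eq: "K W = {s \<in> topspace KT. restrict s (pre W) \<in> {x. \<forall>z\<in>W. gl x z = y z}}" for W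
  proof -
    have e: "gl s z = gl (restrict s (pre W)) z" if "z \<in> W" for s z by (rule gl_loc[OF that]) simp
    show ?thesis unfolding K_def
    proof (intro Collect_cong conj_cong refl)
      fix s show "(\<forall>z\<in>W. gl s z = y z) = (restrict s (pre W) \<in> {x. \<forall>z\<in>W. gl x z = y z})"
        using e[of _ s] by auto
    qed
  qed
  define \<U> where "\<U> = K ` {W. finite W \<and> W \<subseteq> lattice d}"
  have cl: "\<forall>C\<in>\<U>. closedin KT C"
  proof
    fix C assume "C \<in> \<U>"
    then obtain W where W: "finite W" "C = K W" unfolding \<U>_def by blast
    show "closedin KT C" unfolding W(2) K_eq[of W] by (rule cyl_closed[OF finite_pre[OF W(1)]])
  qed
  have fip: "\<Inter>\<F> \<noteq> {}" if F: "finite \<F>" "\<F> \<subseteq> \<U>" for \<F>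
  proof -
    have "\<forall>C\<in>\<F>. \<exists>W. finite W \<and> W \<subseteq> lattice d \<and> C = K W" using F(2) unfolding \<U>_def by blast
    then obtain Wf where Wf: "\<And>C. C \<in> \<F> \<Longrightarrow> finite (Wf C) \<and> Wf C \<subseteq> lattice d \<and> C = K (Wf C)"
      by metis
    define W where "W = \<Union>(Wf ` \<F>)"
    have W: "finite W" "W \<subseteq> lattice d" using Wf F(1) by (auto simp: W_def)
    obtain s where s: "s \<in> configs d {0..<q}" "\<forall>z\<in>W. gl s z = y z" using H[OF W] by blast
    have "s \<in> C" if "C \<in> \<F>" for C
    proof -
      have "Wf C \<subseteq> W" using that by (auto simp: W_def)
      then have "s \<in> K (Wf C)" using s by (auto simp: K_def topspace_KT)
      moreover have "C = K (Wf C)" using Wf[OF that] by blast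
      ultimately show ?thesis by (simp only:)
    qed
    then show ?thesis by blast
  qed
  have "\<Inter>\<U> \<noteq> {}" using compact_KT unfolding compact_space_fip using cl fip by blast
  then obtain s where s: "s \<in> \<Inter>\<U>" by blast
  have sK: "s \<in> K W" if "finite W" "W \<subseteq> lattice d" for W using s that unfolding \<U>_def by blast
  have sc: "s \<in> configs d {0..<q}" using sK[of "{}"] by (simp add: K_def topspace_KT)
  have "dca_global d (q, V, tab) s = y"
  proof (rule ext)
    fix z show "dca_global d (q, V, tab) s z = y z"
    proof (cases "z \<in> lattice d")
      case True
      then have "gl s z = y z" using sK[of "{z}"] by (auto simp: K_def)
      then show ?thesis using True by (simp add: G_eq)
    next
      case False
      then show ?thesis using y by (auto simp: G_eq configs_def PiE_iff extensional_def)
    qed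
  qed
  then show ?thesis using sc by blast
qed

end


context ca
begin

abbreviation "U \<equiv> uniform_count_measure {0..<q}"
definition "mu = bernoulli_unif d q"
definition "MM = PiM (lattice d) (\<lambda>_. count_space {0..<q})"
definition "u = (1 / of_nat q :: ennreal)"

lemma probU: "prob_space U" using q1 by (intro prob_space_uniform_count_measure) auto

lemma pps: "product_prob_space (\<lambda>_. U)"
proof -
  interpret prob_space U by (rule probU)
  show ?thesis by unfold_locales
qed

lemma mu_eq: "mu = PiM (lattice d) (\<lambda>_. U)" by (simp add: mu_def bernoulli_unif_def)

lemma space_mu: "space mu = configs d {0..<q}"
  by (simp add: mu_eq space_PiM configs_def space_uniform_count_measure)

lemma sets_mu: "sets mu = sets MM"
  unfolding mu_eq MM_def by (rule sets_PiM_cong) (simp_all add: sets_uniform_count_measure)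

lemma space_MM: "space MM = configs d {0..<q}"
  by (simp add: MM_def space_PiM configs_def)

lemma prob_mu: "prob_space mu"
  unfolding mu_eq by (rule prob_space_PiM) (rule probU)

lemma u_alt: "u = ennreal (1 / real q)"
proof -
  have "(1::ennreal) / ennreal (real q) = ennreal (1 / real q)"
    using divide_ennreal[of 1 "real q"] q1 by simp
  then show ?thesis by (simp add: u_def ennreal_of_nat_eq_real_of_nat)
qed

lemma qu: "of_nat q * u = 1"
proof -
  have "(1::ennreal) / ennreal (real q) = ennreal (1 / real q)"
    using divide_ennreal[of 1 "real q"] q1 by simp
  then have "of_nat q * u = ennreal (real q) * ennreal (1 / real q)"
    by (simp add: u_def ennreal_of_nat_eq_real_of_nat)
  also have "\<dots> = ennreal (real q * (1 / real q))" by (rule ennreal_mult''[symmetric]) simp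
  also have "\<dots> = 1" using q1 by simp
  finally show ?thesis .
qed

lemma pt_cyl:
  assumes D: "finite D" "D \<subseteq> lattice d" and x: "x \<in> PiE D (\<lambda>_. {0..<q})"
  shows "{s \<in> space mu. restrict s D = x} \<in> sets mu \<and> emeasure mu {s \<in> space mu. restrict s D = x} = u ^ card D"
proof -
  interpret product_prob_space "\<lambda>_. U" "lattice d" by (rule pps)
  have e: "{s \<in> space mu. restrict s D = x} = prod_emb (lattice d) (\<lambda>_. U) D (PiE D (\<lambda>i. {x i}))"
  proof -
    have "restrict s D \<in> PiE D (\<lambda>i. {x i}) \<longleftrightarrow> restrict s D = x" for s
    proof
      assume "restrict s D \<in> PiE D (\<lambda>i. {x i})"
      then show "restrict s D = x" using x by (intro PiE_ext[of _ D "\<lambda>_. UNIV"]) (auto simp: PiE_iff)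
    qed (use x in \<open>auto simp: PiE_iff\<close>)
    then show ?thesis unfolding mu_eq prod_emb_def vimage_def Int_def space_PiM by blast
  qed
  have s: "(\<lambda>i. {x i}) i \<in> sets U" if "i \<in> D" for i using x that by (auto simp: sets_uniform_count_measure)
  have "emeasure mu {s \<in> space mu. restrict s D = x} = (\<Prod>i\<in>D. emeasure U {x i})"
    unfolding e unfolding mu_eq by (rule emeasure_PiM_emb[OF D(2) D(1)]) (use s in simp)
  also have "\<dots> = (\<Prod>i\<in>D. u)"
  proof (intro prod.cong refl)
    fix i assume "i \<in> D"
    then have "{x i} \<subseteq> {0..<q}" using x by auto
    then show "emeasure U {x i} = u" by (simp add: emeasure_uniform_count_measure u_alt)
  qed
  finally show ?thesis using e D s unfolding mu_eq
    by (auto intro!: measurable_prod_emb sets_PiM_I_finite)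
qed

lemma cyl_meas:
  assumes D: "finite D" "D \<subseteq> lattice d" and Q: "Q \<subseteq> PiE D (\<lambda>_. {0..<q})"
  shows "{s \<in> space mu. restrict s D \<in> Q} \<in> sets mu \<and>
         emeasure mu {s \<in> space mu. restrict s D \<in> Q} = of_nat (card Q) * u ^ card D"
proof -
  have finQ: "finite Q" using Q finPi[OF D(1)] finite_subset by blast
  have e: "{s \<in> space mu. restrict s D \<in> Q} = (\<Union>x\<in>Q. {s \<in> space mu. restrict s D = x})" by auto
  have sets: "(\<lambda>x. {s \<in> space mu. restrict s D = x}) ` Q \<subseteq> sets mu" using pt_cyl[OF D] Q by auto
  have "(\<Sum>x\<in>Q. emeasure mu {s \<in> space mu. restrict s D = x}) = emeasure mu (\<Union>x\<in>Q. {s \<in> space mu. restrict s D = x})"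
    by (rule sum_emeasure[OF sets _ finQ]) (auto simp: disjoint_family_on_def)
  moreover have "(\<Sum>x\<in>Q. emeasure mu {s \<in> space mu. restrict s D = x}) = of_nat (card Q) * u ^ card D"
    using pt_cyl[OF D] Q by (simp add: subset_iff)
  ultimately show ?thesis unfolding e using sets finQ by (auto intro: sets.finite_UN)
qed


lemma restr_space: "s \<in> space mu \<Longrightarrow> D \<subseteq> lattice d \<Longrightarrow> restrict s D \<in> PiE D (\<lambda>_. {0..<q})"
  by (auto simp: space_mu configs_def)

lemma G_meas: "dca_global d (q, V, tab) \<in> measurable mu MM"
proof -
  have eq: "dca_global d (q, V, tab) = (\<lambda>\<omega> i. (\<lambda>i \<omega>. restrict (gl \<omega>) (lattice d) i) i \<omega>)"
    by (rule ext) (simp add: G_eq restrict_def)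
  have coord: "(\<lambda>\<omega>. gl \<omega> i) \<in> measurable mu (count_space {0..<q})" if i: "i \<in> lattice d" for i
    unfolding measurable_count_space_eq2_countable
  proof (intro conjI ballI)
    show "(\<lambda>\<omega>. gl \<omega> i) \<in> space mu \<rightarrow> {0..<q}"
    proof
      fix \<omega> assume "\<omega> \<in> space mu"
      then have "gl \<omega> i < q" using i by (intro gl_range i) (auto simp: space_mu configs_def lattice_def Vlen)
      then show "gl \<omega> i \<in> {0..<q}" by simp
    qed
    fix a
    have pi: "pre {i} \<subseteq> lattice d" using pre_lattice i by auto
    have "(\<lambda>\<omega>. gl \<omega> i) -` {a} \<inter> space mu =
          {s \<in> space mu. restrict s (pre {i}) \<in> {x \<in> PiE (pre {i}) (\<lambda>_. {0..<q}). gl x i = a}}"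
    proof -
      have "gl s i = gl (restrict s (pre {i})) i" for s by (rule gl_loc) auto
      then show ?thesis using restr_space[OF _ pi] by auto
    qed
    moreover have "{s \<in> space mu. restrict s (pre {i}) \<in> {x \<in> PiE (pre {i}) (\<lambda>_. {0..<q}). gl x i = a}} \<in> sets mu"
      using cyl_meas[OF finite_pre pi, of "{x \<in> PiE (pre {i}) (\<lambda>_. {0..<q}). gl x i = a}"] by blast
    ultimately show "(\<lambda>\<omega>. gl \<omega> i) -` {a} \<inter> space mu \<in> sets mu" by simp
  qed
  show ?thesis unfolding eq MM_def
  proof (rule measurable_PiM_single')
    fix i assume i: "i \<in> lattice d"
    have "(\<lambda>\<omega>. restrict (gl \<omega>) (lattice d) i) \<in> measurable mu (count_space {0..<q}) \<longleftrightarrow>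
          (\<lambda>\<omega>. gl \<omega> i) \<in> measurable mu (count_space {0..<q})"
      by (rule measurable_cong) (use i in simp)
    then show "(\<lambda>\<omega>. restrict (gl \<omega>) (lattice d) i) \<in> measurable mu (count_space {0..<q})"
      using coord[OF i] by simp
  next
    show "(\<lambda>\<omega> i. restrict (gl \<omega>) (lattice d) i) \<in> space mu \<rightarrow> PiE (lattice d) (\<lambda>i. space (count_space {0..<q}))"
    proof
      fix \<omega> assume w: "\<omega> \<in> space mu"
      have "gl \<omega> i < q" if "i \<in> lattice d" for i
        using w that by (intro gl_range) (auto simp: space_mu configs_def lattice_def Vlen)
      then show "(\<lambda>i. restrict (gl \<omega>) (lattice d) i) \<in> PiE (lattice d) (\<lambda>i. space (count_space {0..<q}))"
        by auto
    qed
  qed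
qed

lemma distr_cyl:
  assumes F: "F \<in> measurable mu MM" and J: "finite J" "J \<subseteq> lattice d"
    and H: "\<And>p. p \<in> PiE J (\<lambda>_. {0..<q}) \<Longrightarrow> emeasure mu {s \<in> space mu. restrict (F s) J = p} = u ^ card J"
    and A: "\<And>i. i \<in> J \<Longrightarrow> A i \<subseteq> {0..<q}"
  shows "emeasure (distr mu MM F) (prod_emb (lattice d) (\<lambda>_. count_space {0..<q}) J (PiE J A))
         = of_nat (card (PiE J A)) * u ^ card J"
proof -
  let ?X = "prod_emb (lattice d) (\<lambda>_. count_space {0..<q}) J (PiE J A)"
  have Xs: "?X \<in> sets MM" unfolding MM_def
    by (rule measurable_prod_emb[OF J(2)]) (rule sets_PiM_I_finite[OF J(1)], use A in auto)
  have FX: "F -` ?X \<inter> space mu = (\<Union>p\<in>PiE J A. {s \<in> space mu. restrict (F s) J = p})"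
  proof -
    have "F s \<in> space MM" if "s \<in> space mu" for s using measurable_space[OF F that] .
    then have "F s \<in> PiE (lattice d) (\<lambda>_. space (count_space {0..<q}))" if "s \<in> space mu" for s
      using that by (simp add: MM_def space_PiM)
    then show ?thesis unfolding prod_emb_def space_PiM by blast
  qed
  have fin: "finite (PiE J A)" by (rule finite_PiE[OF J(1)]) (use A finite_subset in blast)
  have sets: "(\<lambda>p. {s \<in> space mu. restrict (F s) J = p}) ` PiE J A \<subseteq> sets mu"
  proof
    fix S assume "S \<in> (\<lambda>p. {s \<in> space mu. restrict (F s) J = p}) ` PiE J A"
    then obtain p where p: "p \<in> PiE J A" "S = {s \<in> space mu. restrict (F s) J = p}" by blast
    let ?Y = "prod_emb (lattice d) (\<lambda>_. count_space {0..<q}) J (PiE J (\<lambda>i. {p i}))"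
    have Ys: "?Y \<in> sets MM" unfolding MM_def
      by (rule measurable_prod_emb[OF J(2)]) (rule sets_PiM_I_finite[OF J(1)], use A p in \<open>force simp: PiE_iff\<close>)
    have "restrict f J \<in> PiE J (\<lambda>i. {p i}) \<longleftrightarrow> restrict f J = p" for f
      using p(1) by (auto simp: PiE_iff extensional_def fun_eq_iff)
    moreover have "F s \<in> PiE (lattice d) (\<lambda>_. space (count_space {0..<q}))" if "s \<in> space mu" for s
      using measurable_space[OF F that] by (simp add: MM_def space_PiM)
    ultimately have "S = F -` ?Y \<inter> space mu"
      using p(2) unfolding prod_emb_def space_PiM by blast
    then show "S \<in> sets mu" using measurable_sets[OF F Ys] by simp
  qed
  have "emeasure (distr mu MM F) ?X = emeasure mu (F -` ?X \<inter> space mu)"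
    by (rule emeasure_distr[OF F Xs])
  also have "\<dots> = (\<Sum>p\<in>PiE J A. emeasure mu {s \<in> space mu. restrict (F s) J = p})"
    unfolding FX by (rule sum_emeasure[OF sets _ fin, symmetric]) (auto simp: disjoint_family_on_def)
  also have "\<dots> = (\<Sum>p\<in>PiE J A. u ^ card J)"
  proof (intro sum.cong refl)
    fix p assume "p \<in> PiE J A"
    then have "p \<in> PiE J (\<lambda>_. {0..<q})" using A by (force simp: PiE_iff)
    then show "emeasure mu {s \<in> space mu. restrict (F s) J = p} = u ^ card J" by (rule H)
  qed
  finally show ?thesis by simp
qed


lemma u_pow: assumes "c * q ^ j = q ^ pj" shows "of_nat c * u ^ pj = u ^ j"
proof -
  have "of_nat c * u ^ pj = of_nat c * (of_nat q * u) ^ j * u ^ pj" by (simp add: qu)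
  also have "\<dots> = of_nat (c * q ^ j) * u ^ j * u ^ pj" by (simp add: power_mult_distrib algebra_simps)
  also have "\<dots> = (of_nat q * u) ^ pj * u ^ j" unfolding assms by (simp add: power_mult_distrib algebra_simps)
  finally show ?thesis by (simp add: qu)
qed

lemma G_cyl:
  assumes S: surjF and J: "finite J" "J \<subseteq> lattice d" and p: "p \<in> PiE J (\<lambda>_. {0..<q})"
  shows "emeasure mu {s \<in> space mu. restrict (dca_global d (q, V, tab) s) J = p} = u ^ card J"
proof -
  have pJ: "pre J \<subseteq> lattice d" by (rule pre_lattice[OF J(2)])
  have "{s \<in> space mu. restrict (dca_global d (q, V, tab) s) J = p} = {s \<in> space mu. restrict s (pre J) \<in> CS J p}"
  proof (intro Collect_cong conj_cong refl)
    fix s assume s: "s \<in> space mu"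
    have "restrict (dca_global d (q, V, tab) s) J = p \<longleftrightarrow> (\<forall>z\<in>J. gl s z = p z)"
    proof
      assume "restrict (dca_global d (q, V, tab) s) J = p"
      then show "\<forall>z\<in>J. gl s z = p z" using J(2) by (auto simp: G_eq fun_eq_iff subset_iff) (metis restrict_apply')
    next
      assume "\<forall>z\<in>J. gl s z = p z"
      then show "restrict (dca_global d (q, V, tab) s) J = p" using J(2) p
        by (intro PiE_ext[of _ J "\<lambda>_. UNIV"]) (auto simp: G_eq PiE_iff)
    qed
    also have "\<dots> \<longleftrightarrow> (\<forall>z\<in>J. gl (restrict s (pre J)) z = p z)"
    proof -
      have "gl s z = gl (restrict s (pre J)) z" if "z \<in> J" for z by (rule gl_loc[OF that]) simp
      then show ?thesis by auto
    qed
    also have "\<dots> \<longleftrightarrow> restrict s (pre J) \<in> CS J p"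
      using restr_space[OF s pJ] by (simp add: CS_def)
    finally show "restrict (dca_global d (q, V, tab) s) J = p \<longleftrightarrow> restrict s (pre J) \<in> CS J p" .
  qed
  also have "emeasure mu \<dots> = of_nat (card (CS J p)) * u ^ card (pre J)"
    using cyl_meas[OF finite_pre[OF J(1)] pJ, of "CS J p"] by (auto simp: CS_def)
  also have "\<dots> = u ^ card J" by (rule u_pow[OF balance[OF S J p]])
  finally show ?thesis .
qed

lemma id_cyl:
  assumes J: "finite J" "J \<subseteq> lattice d" and p: "p \<in> PiE J (\<lambda>_. {0..<q})"
  shows "emeasure mu {s \<in> space mu. restrict ((\<lambda>s. s) s) J = p} = u ^ card J"
  using pt_cyl[OF J p] by simp

lemma fin_distr: "F \<in> measurable mu MM \<Longrightarrow> finite_measure (distr mu MM F)"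
  using prob_space.prob_space_distr[OF prob_mu] unfolding prob_space_def by blast

lemma id_meas: "(\<lambda>s. s) \<in> measurable mu MM" by (rule measurable_ident_sets[OF sets_mu])

lemma surj_distr:
  assumes S: surjF
  shows "distr mu MM (dca_global d (q, V, tab)) = distr mu MM (\<lambda>s. s)"
proof (rule measure_eqI_PiM_infinite[where I="lattice d" and M="\<lambda>_. count_space {0..<q}"])
  show "sets (distr mu MM (dca_global d (q, V, tab))) = sets (PiM (lattice d) (\<lambda>_. count_space {0..<q}))"
    by (simp add: MM_def)
  show "sets (distr mu MM (\<lambda>s. s)) = sets (PiM (lattice d) (\<lambda>_. count_space {0..<q}))"
    by (simp add: MM_def)
  show "finite_measure (distr mu MM (dca_global d (q, V, tab)))" by (rule fin_distr[OF G_meas])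
  fix A J assume J: "finite J" "J \<subseteq> lattice d" and A: "\<And>i. i \<in> J \<Longrightarrow> A i \<in> sets (count_space {0..<q})"
  have A': "\<And>i. i \<in> J \<Longrightarrow> A i \<subseteq> {0..<q}" using A by simp
  show "emeasure (distr mu MM (dca_global d (q, V, tab))) (prod_emb (lattice d) (\<lambda>_. count_space {0..<q}) J (PiE J A)) =
        emeasure (distr mu MM (\<lambda>s. s)) (prod_emb (lattice d) (\<lambda>_. count_space {0..<q}) J (PiE J A))"
    using distr_cyl[OF G_meas J G_cyl[OF S J] A'] distr_cyl[OF id_meas J id_cyl[OF J] A'] by simp
qed

lemma nonsurj_distr:
  assumes S: "\<not> surjF"
  shows "distr mu MM (dca_global d (q, V, tab)) \<noteq> distr mu MM (\<lambda>s. s)"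
proof
  assume eq: "distr mu MM (dca_global d (q, V, tab)) = distr mu MM (\<lambda>s. s)"
  have sub: "dca_global d (q, V, tab) ` configs d {0..<q} \<subseteq> configs d {0..<q}"
    using measurable_space[OF G_meas] by (auto simp: space_mu space_MM)
  then obtain y where y: "y \<in> configs d {0..<q}" "y \<notin> dca_global d (q, V, tab) ` configs d {0..<q}"
    using S unfolding surjF_def by blast
  obtain W where W: "finite W" "W \<subseteq> lattice d" and nW: "\<not> (\<exists>s\<in>configs d {0..<q}. \<forall>z\<in>W. gl s z = y z)"
    using compact_lift[OF y(1)] y(2) by blast
  define p where "p = restrict y W"
  have p: "p \<in> PiE W (\<lambda>_. {0..<q})" using y(1) W(2) by (auto simp: p_def configs_def)
  let ?X = "prod_emb (lattice d) (\<lambda>_. count_space {0..<q}) W (PiE W (\<lambda>i. {p i}))"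
  have Xs: "?X \<in> sets MM" unfolding MM_def
    by (rule measurable_prod_emb[OF W(2)]) (rule sets_PiM_I_finite[OF W(1)], use p in \<open>force simp: PiE_iff\<close>)
  have rp: "restrict f W \<in> PiE W (\<lambda>i. {p i}) \<longleftrightarrow> restrict f W = p" for f
    using p by (auto simp: PiE_iff extensional_def fun_eq_iff)
  have spMM: "f \<in> PiE (lattice d) (\<lambda>_. space (count_space {0..<q}))" if "f \<in> configs d {0..<q}" for f
    using that by (simp add: configs_def)
  have "dca_global d (q, V, tab) -` ?X \<inter> space mu = {}"
  proof (rule ccontr)
    assume "dca_global d (q, V, tab) -` ?X \<inter> space mu \<noteq> {}"
    then obtain s where s: "s \<in> space mu" "restrict (dca_global d (q, V, tab) s) W = p"
      unfolding prod_emb_def space_PiM using rp by blast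
    have "\<forall>z\<in>W. gl s z = y z"
    proof
      fix z assume z: "z \<in> W"
      have "restrict (dca_global d (q, V, tab) s) W z = p z" using s(2) by simp
      then show "gl s z = y z" using z W(2) by (auto simp: G_eq p_def)
    qed
    then show False using nW s(1) by (auto simp: space_mu)
  qed
  then have "emeasure (distr mu MM (dca_global d (q, V, tab))) ?X = 0"
    by (simp add: emeasure_distr[OF G_meas Xs])
  moreover have "emeasure (distr mu MM (\<lambda>s. s)) ?X = u ^ card W"
  proof -
    have "(\<lambda>s. s) -` ?X \<inter> space mu = {s \<in> space mu. restrict s W = p}"
      unfolding prod_emb_def space_PiM using rp spMM by (auto simp: space_mu)
    then show ?thesis using emeasure_distr[OF id_meas Xs] pt_cyl[OF W p] by simp
  qed
  moreover have "u ^ card W \<noteq> 0" using q1 by (simp add: u_alt)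
  ultimately show False using eq by simp
qed

end


lemma map_of_A: "map_of (map (\<lambda>(w,a). (([],w),a)) tab) ([], w) = map_of tab w"
  by (induction tab) auto

lemma map_of_B: "i \<in> set xs \<Longrightarrow> map_of (map (\<lambda>i. (([],[i]),i)) xs) ([], [i]) = Some i"
  by (induction xs) auto

lemma vadd_zero: "length z = d \<Longrightarrow> vadd z (replicate d 0) = z"
  by (rule nth_equalityI) (auto simp: nth_vadd)

context ca
begin

abbreviation "AA \<equiv> (q, q, [], V, map (\<lambda>(w,a). (([],w),a)) tab) :: sca"
abbreviation "BB \<equiv> (q, q, [], [replicate d 0], map (\<lambda>i. (([],[i]),i)) (rev [0..<q])) :: sca"

lemma valid_AB: "sca_valid d AA" "sca_valid d BB"
proof -
  show "sca_valid d AA"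
    unfolding sca_valid_def prod.case
  proof (intro conjI allI impI)
    show "1 \<le> q" by (rule q1)
    show "\<forall>v\<in>set V. length v = d" using Vlen by blast
    fix u w :: "nat list" assume a: "length u = length ([]::int list list) \<and> set u \<subseteq> {0..<q} \<and> length w = length V \<and> set w \<subseteq> {0..<q}"
    then have "u = []" by simp
    moreover obtain a where "a \<in> {0..<q}" "map_of tab w = Some a" using valid a unfolding dca_valid_def by auto
    ultimately show "\<exists>a\<in>{0..<q}. map_of (map (\<lambda>(w,a). (([],w),a)) tab) (u, w) = Some a"
      by (auto simp: map_of_A)
  qed (use q1 in simp_all)
  show "sca_valid d BB"
    unfolding sca_valid_def prod.case
  proof (intro conjI allI impI)
    show "1 \<le> q" by (rule q1)
    fix u w :: "nat list" assume a: "length u = length ([]::int list list) \<and> set u \<subseteq> {0..<q} \<and> length w = length [replicate d (0::int)] \<and> set w \<subseteq> {0..<q}"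
    then have "u = []" by simp
    moreover obtain i where "w = [i]" "i < q" using a by (cases w) auto
    ultimately show "\<exists>a\<in>{0..<q}. map_of (map (\<lambda>i. (([],[i]),i)) (rev [0..<q])) (u, w) = Some a"
      using map_of_B[of i "rev [0..<q]"] by auto
  qed (use q1 in simp_all)
qed

lemma FA: "sca_F d AA c s = dca_global d (q, V, tab) s"
  unfolding sca_F_def dca_global_def by (simp add: map_of_A)

lemma FB: "s \<in> configs d {0..<q} \<Longrightarrow> sca_F d BB c s = s"
proof -
  assume s: "s \<in> configs d {0..<q}"
  show ?thesis
  proof (rule ext)
    fix z
    show "sca_F d BB c s z = s z"
    proof (cases "z \<in> lattice d")
      case True
      then have vz: "vadd z (replicate d 0) = z" by (intro vadd_zero) (simp add: lattice_def)
      have "s z < q" using s True by (auto simp: configs_def)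
      then have mb: "map_of (map (\<lambda>i. (([],[i]),i)) (rev [0..<q])) ([], [s z]) = Some (s z)"
        using map_of_B[of "s z" "rev [0..<q]"] by simp
      show ?thesis unfolding sca_F_def prod.case list.map
        by (simp only: restrict_apply'[OF True] vz mb option.sel)
    next
      case False
      then show ?thesis using s by (auto simp: sca_F_def configs_def PiE_iff extensional_def)
    qed
  qed
qed

lemma configs_ne: "configs d {0..<q} \<noteq> {}"
proof -
  have "(\<lambda>z\<in>lattice d. 0) \<in> configs d {0..<q}" using q1 by (auto simp: configs_def)
  then show ?thesis by blast
qed

lemma PN_iff: "(\<forall>c\<in>configs d {0..<sca_states AA}. sca_N d AA c = sca_N d BB c) \<longleftrightarrow> surjF"
proof -
  have "sca_N d AA c = dca_global d (q, V, tab) ` configs d {0..<q}" for c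
    by (simp add: sca_N_def sca_randoms_def FA)
  moreover have "sca_N d BB c = configs d {0..<q}" for c
  proof -
    have "sca_N d BB c = (\<lambda>s. s) ` configs d {0..<q}"
      unfolding sca_N_def sca_randoms_def by (intro image_cong) (simp, erule FB)
    then show ?thesis by simp
  qed
  ultimately show ?thesis using configs_ne by (auto simp: sca_states_def surjF_def)
qed

lemma PS_iff: "(\<forall>c\<in>configs d {0..<sca_states AA}. sca_S d AA c = sca_S d BB c) \<longleftrightarrow> surjF"
proof -
  have "sca_S d AA c = distr mu MM (dca_global d (q, V, tab))" for c
  proof -
    have "sca_F d AA c = dca_global d (q, V, tab)" by (rule ext) (rule FA)
    then show ?thesis unfolding sca_S_def sca_randoms_def sca_states_def mu_def MM_def by simp
  qed
  moreover have "sca_S d BB c = distr mu MM (\<lambda>s. s)" for c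
  proof -
    have "sca_S d BB c = distr mu MM (sca_F d BB c)"
      by (simp add: sca_S_def sca_randoms_def sca_states_def mu_def MM_def)
    also have "\<dots> = distr mu MM (\<lambda>s. s)"
      by (rule distr_cong) (simp_all add: space_mu, erule FB)
    finally show ?thesis .
  qed
  ultimately show ?thesis using configs_ne surj_distr nonsurj_distr by (auto simp: sca_states_def)
qed

end

theorem theorem1:
  fixes d :: nat
  assumes "d \<ge> 1"
  shows "reduces_to (SURJ d) (P_N d) \<and> reduces_to (SURJ d) (P_S d)"
proof -
  have main: "pair_valid d (red d n) \<and>
     (dca_surjective d (dca_decode n) \<longleftrightarrow> snd (P_N d) (red d n)) \<and>
     (dca_surjective d (dca_decode n) \<longleftrightarrow> snd (P_S d) (red d n))"
    if v: "dca_valid d (dca_decode n)" for n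
  proof -
    obtain q V tab where dec: "dca_decode n = (q, V, tab)" by (cases "dca_decode n") auto
    interpret ca d q V tab using v assms by unfold_locales (simp_all add: dec)
    have pd: "pair_decode (red d n) = (AA, BB)" by (rule decode_red[OF dec])
    have sj: "dca_surjective d (dca_decode n) \<longleftrightarrow> surjF"
      by (simp add: dec dca_surjective_def surjF_def)
    show ?thesis
      using valid_AB PN_iff PS_iff sj pd
      by (simp add: pair_valid_def P_N_def P_S_def sca_states_def)
  qed
  have "reduces_to (SURJ d) (P_N d)"
    unfolding reduces_to_def
  proof (rule exI[of _ "red d"], intro conjI allI impI)
    show "computable (red d)" by (rule computable_red)
    fix n assume "fst (SURJ d) n"
    then have v: "dca_valid d (dca_decode n)" by (simp add: SURJ_def)
    show "fst (P_N d) (red d n)" unfolding P_N_def fst_conv using main[OF v] by blast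
    show "snd (SURJ d) n \<longleftrightarrow> snd (P_N d) (red d n)" unfolding SURJ_def snd_conv using main[OF v] by blast
  qed
  moreover have "reduces_to (SURJ d) (P_S d)"
    unfolding reduces_to_def
  proof (rule exI[of _ "red d"], intro conjI allI impI)
    show "computable (red d)" by (rule computable_red)
    fix n assume "fst (SURJ d) n"
    then have v: "dca_valid d (dca_decode n)" by (simp add: SURJ_def)
    show "fst (P_S d) (red d n)" unfolding P_S_def fst_conv using main[OF v] by blast
    show "snd (SURJ d) n \<longleftrightarrow> snd (P_S d) (red d n)" unfolding SURJ_def snd_conv using main[OF v] by blast
  qed
  ultimately show ?thesis ..
qed


end
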